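(* Let $\mathsf P\subset\mathbb R^m$ be a $(\mu,\epsilon)$-net, $0<\rho_0\le\mu/4$, and $\mathsf P'$ a $\rho_0\epsilon$-perturbation of $\mathsf P$; set $\epsilon'=(1+\rho_0)\epsilon$, $\mu'=(\mu-2\rho_0)/(1+\rho_0)$. Let $0<\Gamma_0\le1$ and $\delta_0\ge0$ satisfy $\delta_0\le\Gamma_0^{m+1}$ and $\Gamma_0\le\frac{2\mu^2}{75}$. Suppose there is no simplex $\tau\subseteq\mathsf P'$ satisfying all of the following: (P1) $\tau$ has the $\alpha_0$-hoop property with $\alpha_0=2(16/\mu)^3\Gamma_0$; (P2) $R(\tau_p)<2\epsilon$ for all $p\in\tau$; (P3) $L(\tau)<\frac52\big(1+\frac12\delta_0\mu\big)\epsilon$; (P4) every facet of $\tau$ is $\Gamma_0$-good. Then $\mathsf P'$ contains no forbidden configuration (with parameters $\mu',\epsilon',\delta_0,\Gamma_0$), and consequently every $m$-simplex of $\mathrm{Del}_{D_{\epsilon'}}(\mathsf P')$ is $\Gamma_0$-good and $\delta$-protected, with $\delta=\delta_0\mu'\epsilon'$.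
   Context: Let $d(x,X)$ denote Euclidean distance from a point to a set; $B(c,r)$ is the open ball. For a finite $\mathsf P\subset\mathbb R^m$ and $\epsilon>0$, $\mathsf P$ is $\epsilon$-dense if $d(x,\mathsf P\cup\partial\,\mathrm{conv}(\mathsf P))<\epsilon$ for every $x\in\mathrm{conv}(\mathsf P)$; it is $\mu\epsilon$-separated if $\|p-q\|\ge\mu\epsilon$ for all distinct $p,q\in\mathsf P$. For $0<\mu\le1$, $\mathsf P$ is a $(\mu,\epsilon)$-net if it is $\epsilon$-dense and $\mu\epsilon$-separated. $D_\epsilon(\mathsf P)=\{x\in\mathrm{conv}(\mathsf P): d(x,\partial\,\mathrm{conv}(\mathsf P))\ge\epsilon\}$. A $\rho_0\epsilon$-perturbation of $\mathsf P$ is a bijection $\zeta:\mathsf P\to\mathsf P'\subset\mathbb R^m$ with $\|\zeta(p)-p\|\le\rho_0\epsilon$ for all $p$. A simplex is a nonempty finite subset $\sigma\subset\mathbb R^m$ (vertices need not be affinely independent); $\dim\sigma=|\sigma|-1$; faces are nonempty subsets; facets are faces of dimension $\dim\sigma-1$. For $p\in\sigma$, $\sigma_p=\sigma\setminus\{p\}$. $L(\sigma)$ is the largest distance between vertices. Altitude $D(p,\sigma)=d(p,\mathrm{aff}(\sigma_p))$. Thickness of a $j$-simplex: $\Upsilon(\sigma)=1$ if $j=0$, else $\min_{p}D(p,\sigma)/(jL(\sigma))$. $\sigma$ is $\Gamma_0$-good if every $j$-face $\sigma^j$ satisfies $\Upsilon(\sigma^j)\ge\Gamma_0^j$; $\Gamma_0$-bad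 otherwise; a $\Gamma_0$-flake is a $\Gamma_0$-bad simplex whose proper faces are all $\Gamma_0$-good. A circumscribing ball of $\sigma$ is an open ball whose boundary contains all vertices of $\sigma$. If one exists, the circumcentre $c(\sigma)$ and circumradius $R(\sigma)$ are the centre and radius of the smallest one (write $R(\sigma)<\infty$); otherwise $R(\sigma)=\infty$. The circumsphere is $S(\sigma)=\partial B(c(\sigma),R(\sigma))\cap\mathrm{aff}(\sigma)$. A Delaunay ball for finite $\mathsf P$ is an open ball $B(x,r)$ containing no point of $\mathsf P$ such that every open ball centred at $x$ containing no point of $\mathsf P$ is contained in $B(x,r)$. $\sigma\subseteq\mathsf P$ is Delaunay if its vertices lie on $\partial B$ for some Delaunay ball $B$. $\mathrm{Del}_{D_\epsilon}(\mathsf P)$ is the set of Delaunay simplices having a Delaunay ball centred in $D_\epsilon(\mathsf P)$. A Delaunay simplex $\sigma$ is $\delta$-protected if it has a Delaunay ball $B$ with $d(q,\partial B)>\delta$ for all $q\in\mathsf P\setminus\sigma$. Forbidden configuration: given finite $\mathsf P'\subset\mathbb R^m$ and parameters $\mu',\epsilon'>0$, $0<\Gamma_0\le1$, $\delta_0\ge0$, a $(k+1)$-simplex $\tau\subseteq\mathsf P'$ with $k\le m$ is a forbidden configuration if it is a $\Gamma_0$-flake and there exist $p\in\tau$ and a circumscribing ball $B(C,R)$ of $\tau_p$ with $R<\epsilon'$ and $\big|\,\|p-C\|-R\,\big|\le\delta_0\mu'\epsilon'$. A simplex $\tau$ has the $\alpha_0$-hoop property ($\alpha_0>0$) if for every $p\in\tau$,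 $R(\tau_p)<\infty$ and $d(p,S(\tau_p))\le\alpha_0R(\tau_p)$. *)

theory Defs
  imports "HOL-Analysis.Analysis"
begin

text \<open>Point sets live in an abstract Euclidean space 'a, of dimension m = DIM('a).\<close>

definition eps_dense :: "'a::euclidean_space set \<Rightarrow> real \<Rightarrow> bool" where
  "eps_dense P \<epsilon> \<longleftrightarrow>
     (\<forall>x \<in> convex hull P. infdist x (P \<union> frontier (convex hull P)) < \<epsilon>)"

definition separated :: "'a::euclidean_space set \<Rightarrow> real \<Rightarrow> bool" where
  "separated P s \<longleftrightarrow> (\<forall>p\<in>P. \<forall>q\<in>P. p \<noteq> q \<longrightarrow> dist p q \<ge> s)"

definition is_net :: "'a::euclidean_space set \<Rightarrow> real \<Rightarrow> real \<Rightarrow> bool" where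
  "is_net P \<mu> \<epsilon> \<longleftrightarrow> finite P \<and> 0 < \<mu> \<and> \<mu> \<le> 1 \<and> 0 < \<epsilon> \<and>
     eps_dense P \<epsilon> \<and> separated P (\<mu> * \<epsilon>)"

definition D_eps :: "'a::euclidean_space set \<Rightarrow> real \<Rightarrow> 'a set" where
  "D_eps P \<epsilon> = {x \<in> convex hull P. infdist x (frontier (convex hull P)) \<ge> \<epsilon>}"

definition is_perturbation :: "'a::euclidean_space set \<Rightarrow> 'a set \<Rightarrow> real \<Rightarrow> bool" where
  "is_perturbation P P' r \<longleftrightarrow> (\<exists>\<zeta>. bij_betw \<zeta> P P' \<and> (\<forall>p\<in>P. dist (\<zeta> p) p \<le> r))"

text \<open>Simplices: nonempty finite sets of points.\<close>

definition simplex_L :: "'a::euclidean_space set \<Rightarrow> real" where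
  "simplex_L \<sigma> = Max {dist p q | p q. p \<in> \<sigma> \<and> q \<in> \<sigma>}"

definition altitude :: "'a::euclidean_space \<Rightarrow> 'a set \<Rightarrow> real" where
  "altitude p \<sigma> = infdist p (affine hull (\<sigma> - {p}))"

definition thickness :: "'a::euclidean_space set \<Rightarrow> real" where
  "thickness \<sigma> = (if card \<sigma> = 1 then 1
     else Min ((\<lambda>p. altitude p \<sigma>) ` \<sigma>) / (real (card \<sigma> - 1) * simplex_L \<sigma>))"

definition good :: "real \<Rightarrow> 'a::euclidean_space set \<Rightarrow> bool" where
  "good \<Gamma> \<sigma> \<longleftrightarrow> (\<forall>\<tau>. \<tau> \<subseteq> \<sigma> \<and> \<tau> \<noteq> {} \<longrightarrow> thickness \<tau> \<ge> \<Gamma> ^ (card \<tau> - 1))"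

definition flake :: "real \<Rightarrow> 'a::euclidean_space set \<Rightarrow> bool" where
  "flake \<Gamma> \<sigma> \<longleftrightarrow> \<not> good \<Gamma> \<sigma> \<and> (\<forall>\<tau>. \<tau> \<subset> \<sigma> \<and> \<tau> \<noteq> {} \<longrightarrow> good \<Gamma> \<tau>)"

definition circumscribes :: "'a::euclidean_space set \<Rightarrow> 'a \<Rightarrow> real \<Rightarrow> bool" where
  "circumscribes \<sigma> c r \<longleftrightarrow> \<sigma> \<subseteq> sphere c r"

definition has_circumball :: "'a::euclidean_space set \<Rightarrow> bool" where
  "has_circumball \<sigma> \<longleftrightarrow> (\<exists>c r. circumscribes \<sigma> c r)"

definition circumradius :: "'a::euclidean_space set \<Rightarrow> real" where
  "circumradius \<sigma> = Inf {r. \<exists>c. circumscribes \<sigma> c r}"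

definition circumcentre :: "'a::euclidean_space set \<Rightarrow> 'a" where
  "circumcentre \<sigma> = (THE c. circumscribes \<sigma> c (circumradius \<sigma>))"

definition circumsphere :: "'a::euclidean_space set \<Rightarrow> 'a set" where
  "circumsphere \<sigma> = sphere (circumcentre \<sigma>) (circumradius \<sigma>) \<inter> affine hull \<sigma>"

text \<open>Hoop property. The distance to the empty set is +infinity in the paper, so we
  require the circumsphere to be nonempty (Isabelle's infdist to the empty set is 0).\<close>

definition hoop :: "real \<Rightarrow> 'a::euclidean_space set \<Rightarrow> bool" where
  "hoop \<alpha> \<tau> \<longleftrightarrow> (\<forall>p\<in>\<tau>. has_circumball (\<tau> - {p}) \<and> circumsphere (\<tau> - {p}) \<noteq> {} \<and>
      infdist p (circumsphere (\<tau> - {p})) \<le> \<alpha> * circumradius (\<tau> - {p}))"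

definition delaunay_ball :: "'a::euclidean_space set \<Rightarrow> 'a \<Rightarrow> real \<Rightarrow> bool" where
  "delaunay_ball P x r \<longleftrightarrow> ball x r \<inter> P = {} \<and>
     (\<forall>r'. ball x r' \<inter> P = {} \<longrightarrow> ball x r' \<subseteq> ball x r)"

definition Del_D :: "'a::euclidean_space set \<Rightarrow> real \<Rightarrow> 'a set set" where
  "Del_D P \<epsilon> = {\<sigma>. \<sigma> \<noteq> {} \<and> \<sigma> \<subseteq> P \<and>
     (\<exists>x r. delaunay_ball P x r \<and> \<sigma> \<subseteq> sphere x r \<and> x \<in> D_eps P \<epsilon>)}"

definition protected :: "'a::euclidean_space set \<Rightarrow> real \<Rightarrow> 'a set \<Rightarrow> bool" where
  "protected P \<delta> \<sigma> \<longleftrightarrow> (\<exists>x r. delaunay_ball P x r \<and> \<sigma> \<subseteq> sphere x r \<and>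
     (\<forall>q\<in>P - \<sigma>. infdist q (sphere x r) > \<delta>))"

text \<open>Forbidden configuration: a (k+1)-simplex with k \<le> m, i.e. 2 \<le> card \<tau> \<le> m + 2.\<close>

definition forbidden_config ::
  "'a::euclidean_space set \<Rightarrow> real \<Rightarrow> real \<Rightarrow> real \<Rightarrow> real \<Rightarrow> 'a set \<Rightarrow> bool" where
  "forbidden_config P' \<mu>' \<epsilon>' \<Gamma>\<^sub>0 \<delta>\<^sub>0 \<tau> \<longleftrightarrow>
     \<tau> \<subseteq> P' \<and> 2 \<le> card \<tau> \<and> card \<tau> \<le> DIM('a) + 2 \<and> flake \<Gamma>\<^sub>0 \<tau> \<and>
     (\<exists>p\<in>\<tau>. \<exists>C R. circumscribes (\<tau> - {p}) C R \<and> R < \<epsilon>' \<and>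
        \<bar>dist p C - R\<bar> \<le> \<delta>\<^sub>0 * \<mu>' * \<epsilon>')"

end

theory Submission
  imports Defs
begin


lemma proj_affine:
  fixes x :: "'a::euclidean_space"
  assumes A: "affine A" "closed A" "A \<noteq> {}"
  obtains y where "y \<in> A" "infdist x A = dist x y" "\<And>z. z \<in> A \<Longrightarrow> inner (x - y) (z - y) = 0"
proof -
  obtain y where y: "y \<in> A" "infdist x A = dist x y"
    using infdist_attains_inf[OF A(2,3)] by blast
  have "inner (x - y) (z - y) = 0" if z: "z \<in> A" for z
  proof -
    define d where "d = z - y"
    define c where "c = inner (x - y) d"
    have key: "2 * t * c \<le> t\<^sup>2 * inner d d" for t
    proof -
      have "y + t *\<^sub>R (z - y) \<in> A" using mem_affine_3_minus[OF A(1) y(1) z y(1)] by simp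
      hence "dist x y \<le> dist x (y + t *\<^sub>R d)"
        using infdist_le[of "y + t *\<^sub>R d" A x] y(2) d_def by simp
      hence "(dist x y)\<^sup>2 \<le> (dist x (y + t *\<^sub>R d))\<^sup>2" by (simp add: power_mono)
      also have "(dist x (y + t *\<^sub>R d))\<^sup>2 = inner ((x - y) - t *\<^sub>R d) ((x - y) - t *\<^sub>R d)"
        by (simp add: dist_norm power2_norm_eq_inner algebra_simps)
      also have "\<dots> = inner (x-y) (x-y) - 2 * t * c + t\<^sup>2 * inner d d"
        by (simp add: c_def inner_diff_left inner_diff_right inner_commute power2_eq_square algebra_simps)
      finally show ?thesis by (simp add: dist_norm power2_norm_eq_inner)
    qed
    show ?thesis
    proof (cases "d = 0")
      case True then show ?thesis by (simp add: d_def)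
    next
      case False
      hence dd: "inner d d > 0" by simp
      have "2 * (c / inner d d) * c \<le> (c / inner d d)\<^sup>2 * inner d d" by (rule key)
      hence "2 * c\<^sup>2 / inner d d \<le> c\<^sup>2 / inner d d" using dd
        by (simp add: power2_eq_square field_simps)
      hence "c\<^sup>2 \<le> 0" using dd by (simp add: divide_le_cancel)
      thus ?thesis by (simp add: c_def d_def)
    qed
  qed
  thus ?thesis using that y by blast
qed



lemma sq_add: "(norm (a + b))\<^sup>2 = (norm a)\<^sup>2 + 2 * inner a b + (norm (b::'a::real_inner))\<^sup>2"
  by (simp add: power2_norm_eq_inner inner_add_left inner_add_right inner_commute)

lemma sq_diff: "(norm (a - b))\<^sup>2 = (norm a)\<^sup>2 - 2 * inner a b + (norm (b::'a::real_inner))\<^sup>2"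
  by (simp add: power2_norm_eq_inner inner_diff_left inner_diff_right inner_commute)

lemma hull_inner_const:
  fixes S :: "'a::euclidean_space set"
  assumes "\<And>v. v \<in> S \<Longrightarrow> inner (v - y) w = k" "z \<in> affine hull S"
  shows "inner (z - y) w = k"
proof -
  have "S \<subseteq> {x. w \<bullet> x = k + inner y w}"
  proof
    fix x assume "x \<in> S"
    hence "inner (x - y) w = k" by (rule assms(1))
    hence "inner x w - inner y w = k" by (simp add: inner_diff_left)
    thus "x \<in> {x. w \<bullet> x = k + inner y w}" by (simp add: inner_commute)
  qed
  hence "affine hull S \<subseteq> {x. w \<bullet> x = k + inner y w}"
    by (rule hull_minimal) (rule affine_hyperplane)
  hence "w \<bullet> z = k + inner y w" using assms(2) by blast
  moreover have "inner (z - y) w = w \<bullet> z - w \<bullet> y" by (simp add: inner_diff_left inner_diff_right inner_commute)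
  ultimately show ?thesis by (simp add: inner_commute)
qed

lemma circum_char:
  fixes \<sigma> :: "'a::euclidean_space set"
  assumes ne: "\<sigma> \<noteq> {}" and y: "y \<in> affine hull \<sigma>" and sph: "\<sigma> \<subseteq> sphere y r"
  shows "has_circumball \<sigma>" "circumradius \<sigma> = r" "circumcentre \<sigma> = y"
proof -
  obtain v0 where v0: "v0 \<in> \<sigma>" using ne by blast
  have r0: "r \<ge> 0" using sph v0 by (auto simp: subset_iff)
  have main: "r'\<^sup>2 = r\<^sup>2 + (dist y c)\<^sup>2 \<and> r' \<ge> 0" if "circumscribes \<sigma> c r'" for c r'
  proof -
    have sc: "\<sigma> \<subseteq> sphere c r'" using that by (simp add: circumscribes_def)
    have r'0: "r' \<ge> 0" using sc v0 by (auto simp: subset_iff)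
    have eq: "inner (v - y) (y - c) = (r'\<^sup>2 - r\<^sup>2 - (dist y c)\<^sup>2) / 2" if v: "v \<in> \<sigma>" for v
    proof -
      have a: "dist v c = r'" "dist v y = r" using v sc sph by (auto simp: subset_iff dist_commute)
      have "(dist v c)\<^sup>2 = (norm ((v - y) + (y - c)))\<^sup>2"
        by (simp add: dist_norm)
      also have "\<dots> = (dist v y)\<^sup>2 + 2 * inner (v - y) (y - c) + (dist y c)\<^sup>2"
        by (simp only: sq_add dist_norm)
      finally show ?thesis using a by simp
    qed
    have "inner (y - y) (y - c) = (r'\<^sup>2 - r\<^sup>2 - (dist y c)\<^sup>2) / 2"
      by (rule hull_inner_const[OF eq y]) auto
    thus ?thesis using r'0 by simp
  qed
  have cy: "circumscribes \<sigma> y r" using sph by (simp add: circumscribes_def)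
  thus "has_circumball \<sigma>" by (auto simp: has_circumball_def)
  have "Inf {r. \<exists>c. circumscribes \<sigma> c r} = r"
  proof (rule cInf_eq_minimum)
    show "r \<in> {r. \<exists>c. circumscribes \<sigma> c r}" using cy by blast
    fix r' assume "r' \<in> {r. \<exists>c. circumscribes \<sigma> c r}"
    then obtain c where "circumscribes \<sigma> c r'" by blast
    from main[OF this] have "r'\<^sup>2 \<ge> r\<^sup>2" "r' \<ge> 0" by auto
    thus "r \<le> r'" using r0 by (meson power2_le_imp_le)
  qed
  thus cr: "circumradius \<sigma> = r" by (simp add: circumradius_def)
  show "circumcentre \<sigma> = y"
    unfolding circumcentre_def cr
  proof (rule the_equality)
    show "circumscribes \<sigma> y r" by (rule cy)
    fix c assume "circumscribes \<sigma> c r"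
    from main[OF this] show "c = y" by simp
  qed
qed



lemma simplex_L_ge:
  assumes "finite \<sigma>" "u \<in> \<sigma>" "w \<in> \<sigma>"
  shows "dist u w \<le> simplex_L \<sigma>"
proof -
  have fin: "finite {dist p q | p q. p \<in> \<sigma> \<and> q \<in> \<sigma>}"
  proof -
    have "{dist p q | p q. p \<in> \<sigma> \<and> q \<in> \<sigma>} = (\<lambda>(p,q). dist p q) ` (\<sigma> \<times> \<sigma>)" by auto
    thus ?thesis using assms(1) by simp
  qed
  show ?thesis unfolding simplex_L_def by (rule Max_ge[OF fin]) (use assms in blast)
qed

lemma simplex_L_le:
  assumes "finite \<sigma>" "\<sigma> \<noteq> {}" "\<And>u w. u \<in> \<sigma> \<Longrightarrow> w \<in> \<sigma> \<Longrightarrow> dist u w \<le> B"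
  shows "simplex_L \<sigma> \<le> B"
proof -
  have fin: "finite {dist p q | p q. p \<in> \<sigma> \<and> q \<in> \<sigma>}"
  proof -
    have "{dist p q | p q. p \<in> \<sigma> \<and> q \<in> \<sigma>} = (\<lambda>(p,q). dist p q) ` (\<sigma> \<times> \<sigma>)" by auto
    thus ?thesis using assms(1) by simp
  qed
  have ne: "{dist p q | p q. p \<in> \<sigma> \<and> q \<in> \<sigma>} \<noteq> {}" using assms(2) by blast
  show ?thesis unfolding simplex_L_def using assms(3)
    by (subst Max_le_iff[OF fin ne]) blast
qed

lemma altitude_nonneg: "altitude p \<sigma> \<ge> 0"
  by (simp add: altitude_def infdist_nonneg)

lemma good_subset: "good G \<sigma> \<Longrightarrow> \<tau> \<subseteq> \<sigma> \<Longrightarrow> good G \<tau>"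
  unfolding good_def by blast

lemma card_ge2_L_pos:
  assumes "finite \<sigma>" "card \<sigma> \<ge> 2"
  shows "simplex_L \<sigma> > 0"
proof -
  obtain u w where "u \<in> \<sigma>" "w \<in> \<sigma>" "u \<noteq> w"
    using assms by (metis card_le_Suc0_iff_eq not_less_eq_eq numeral_2_eq_2)
  hence "0 < dist u w" by simp
  also have "\<dots> \<le> simplex_L \<sigma>" by (rule simplex_L_ge) fact+
  finally show ?thesis .
qed

lemma thickness_alt:
  assumes "finite \<sigma>" "card \<sigma> \<ge> 2"
  shows "thickness \<sigma> = Min ((\<lambda>p. altitude p \<sigma>) ` \<sigma>) / (real (card \<sigma> - 1) * simplex_L \<sigma>)"
  using assms by (simp add: thickness_def)

lemma le_div_imp: "0 < (d::real) \<Longrightarrow> g \<le> m / d \<Longrightarrow> g * d \<le> m" by (simp add: le_divide_eq)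
lemma lt_div_imp: "0 < (d::real) \<Longrightarrow> m / d < g \<Longrightarrow> m < g * d" by (simp add: divide_less_eq)

lemma good_alt:
  assumes fin: "finite \<sigma>" and c: "card \<sigma> \<ge> 2" and g: "good G \<sigma>" and v: "v \<in> \<sigma>"
  shows "altitude v \<sigma> \<ge> G ^ (card \<sigma> - 1) * real (card \<sigma> - 1) * simplex_L \<sigma>"
proof -
  have ne: "\<sigma> \<noteq> {}" using v by blast
  have th: "thickness \<sigma> \<ge> G ^ (card \<sigma> - 1)" using g ne unfolding good_def by blast
  have pos: "real (card \<sigma> - 1) * simplex_L \<sigma> > 0" using card_ge2_L_pos[OF fin c] c by simp
  have "G ^ (card \<sigma> - 1) * (real (card \<sigma> - 1) * simplex_L \<sigma>) \<le> Min ((\<lambda>p. altitude p \<sigma>) ` \<sigma>)"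
    by (rule le_div_imp[OF pos th[unfolded thickness_alt[OF fin c]]])
  also have "\<dots> \<le> altitude v \<sigma>" using fin v by simp
  finally show ?thesis by (simp add: mult.assoc)
qed

lemma notgood_alt:
  assumes fin: "finite \<sigma>" and c: "card \<sigma> \<ge> 2" and th: "thickness \<sigma> < G ^ (card \<sigma> - 1)"
  obtains a where "a \<in> \<sigma>" "altitude a \<sigma> < G ^ (card \<sigma> - 1) * real (card \<sigma> - 1) * simplex_L \<sigma>"
proof -
  have ne: "\<sigma> \<noteq> {}" using c by auto
  have pos: "real (card \<sigma> - 1) * simplex_L \<sigma> > 0" using card_ge2_L_pos[OF fin c] c by simp
  have "Min ((\<lambda>p. altitude p \<sigma>) ` \<sigma>) < G ^ (card \<sigma> - 1) * (real (card \<sigma> - 1) * simplex_L \<sigma>)"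
    by (rule lt_div_imp[OF pos th[unfolded thickness_alt[OF fin c]]])
  moreover have "Min ((\<lambda>p. altitude p \<sigma>) ` \<sigma>) \<in> (\<lambda>p. altitude p \<sigma>) ` \<sigma>"
    using fin ne by (intro Min_in) auto
  ultimately show ?thesis using that by (auto simp: mult.assoc)
qed

lemma small_good:
  fixes \<sigma> :: "'a::euclidean_space set"
  assumes "finite \<sigma>" "card \<sigma> \<le> 2" "0 < G" "G \<le> 1"
  shows "good G \<sigma>"
  unfolding good_def
proof (intro allI impI)
  fix \<tau> assume t: "\<tau> \<subseteq> \<sigma> \<and> \<tau> \<noteq> {}"
  have ft: "finite \<tau>" using t assms(1) finite_subset by blast
  have ct: "card \<tau> \<le> 2" using card_mono[OF assms(1), of \<tau>] t assms(2) by linarith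
  have "card \<tau> \<ge> 1" using ft t by (simp add: Suc_le_eq card_gt_0_iff)
  then consider "card \<tau> = 1" | "card \<tau> = 2" using ct by linarith
  thus "G ^ (card \<tau> - 1) \<le> thickness \<tau>"
  proof cases
    case 1 thus ?thesis by (simp add: thickness_def)
  next
    case 2
    then obtain u w where uw: "\<tau> = {u, w}" "u \<noteq> w" by (meson card_2_iff)
    have L: "simplex_L \<tau> = dist u w"
    proof (rule antisym)
      show "simplex_L \<tau> \<le> dist u w"
        by (rule simplex_L_le) (auto simp: uw dist_commute)
      show "dist u w \<le> simplex_L \<tau>" by (rule simplex_L_ge) (auto simp: uw)
    qed
    have au: "altitude u \<tau> = dist u w" using uw by (simp add: altitude_def)
    have "\<tau> - {w} = {u}" using uw by auto
    hence aw: "altitude w \<tau> = dist u w" by (simp add: altitude_def dist_commute)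
    have "thickness \<tau> = 1" using 2 uw L au aw by (simp add: thickness_def)
    thus ?thesis using 2 assms by simp
  qed
qed

lemma flake_card:
  fixes \<tau> :: "'a::euclidean_space set"
  assumes "finite \<tau>" "flake G \<tau>" "0 < G" "G \<le> 1"
  shows "card \<tau> \<ge> 3"
  using small_good[OF assms(1) _ assms(3,4)] assms(2) unfolding flake_def by fastforce

lemma flake_exists:
  fixes X :: "'a::euclidean_space set"
  assumes "finite X" "\<not> good G X"
  shows "\<exists>\<tau>. \<tau> \<subseteq> X \<and> flake G \<tau>"
  using assms
proof (induction "card X" arbitrary: X rule: less_induct)
  case less
  show ?case
  proof (cases "flake G X")
    case True thus ?thesis by blast
  next
    case False
    then obtain Z where Z: "Z \<subset> X" "Z \<noteq> {}" "\<not> good G Z"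
      using less.prems unfolding flake_def by blast
    have "card Z < card X" using Z(1) less.prems(1) by (simp add: psubset_card_mono)
    from less.hyps[OF this] Z less.prems(1) obtain \<tau> where "\<tau> \<subseteq> Z" "flake G \<tau>"
      using finite_subset[of Z X] by blast
    thus ?thesis using Z(1) by blast
  qed
qed

lemma flake_notgood_self:
  assumes "flake G \<tau>"
  shows "thickness \<tau> < G ^ (card \<tau> - 1)"
proof -
  from assms obtain \<sigma> where s: "\<sigma> \<subseteq> \<tau>" "\<sigma> \<noteq> {}" "\<not> thickness \<sigma> \<ge> G ^ (card \<sigma> - 1)"
    unfolding flake_def good_def by blast
  have "\<sigma> = \<tau>"
  proof (rule ccontr)
    assume "\<sigma> \<noteq> \<tau>"
    hence "good G \<sigma>" using assms s unfolding flake_def by blast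
    thus False using s unfolding good_def by blast
  qed
  thus ?thesis using s by simp
qed

lemma flake_facet_good:
  assumes "flake G \<tau>" "q \<in> \<tau>" "card \<tau> \<ge> 3" "finite \<tau>"
  shows "good G (\<tau> - {q})"
proof -
  have "\<tau> - {q} \<subset> \<tau>" using assms(2) by blast
  moreover have "card (\<tau> - {q}) \<ge> 2" using assms(2,3,4) by (simp add: card_Diff_singleton)
  hence "\<tau> - {q} \<noteq> {}" by (metis card.empty not_numeral_le_zero)
  ultimately show ?thesis using assms(1) unfolding flake_def by blast
qed



lemma affine_line_ext:
  fixes A :: "'a::real_vector set"
  assumes "affine A"
  shows "affine {z + l *\<^sub>R d | z l. z \<in> A}"
  unfolding affine_def
proof (intro ballI allI impI)
  fix x1 x2 and u v :: real
  assume x1: "x1 \<in> {z + l *\<^sub>R d | z l. z \<in> A}" and x2: "x2 \<in> {z + l *\<^sub>R d | z l. z \<in> A}"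
    and uv: "u + v = 1"
  from x1 obtain z1 l1 where z1: "z1 \<in> A" "x1 = z1 + l1 *\<^sub>R d" by blast
  from x2 obtain z2 l2 where z2: "z2 \<in> A" "x2 = z2 + l2 *\<^sub>R d" by blast
  have "u *\<^sub>R z1 + v *\<^sub>R z2 \<in> A" using assms z1 z2 uv unfolding affine_def by blast
  moreover have "u *\<^sub>R x1 + v *\<^sub>R x2 = (u *\<^sub>R z1 + v *\<^sub>R z2) + (u * l1 + v * l2) *\<^sub>R d"
    unfolding z1(2) z2(2) by (simp add: algebra_simps)
  ultimately show "u *\<^sub>R x1 + v *\<^sub>R x2 \<in> {z + l *\<^sub>R d | z l. z \<in> A}" by blast
qed

lemma aff_rep:
  fixes S :: "'a::euclidean_space set"
  assumes w0: "w0 \<in> affine hull S" and y: "y \<in> affine hull (insert q S)"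
  shows "\<exists>z\<in>affine hull S. \<exists>l. y = z + l *\<^sub>R (q - w0)"
proof -
  let ?X = "{z + l *\<^sub>R (q - w0) | z l. z \<in> affine hull S}"
  have "affine ?X" by (rule affine_line_ext) simp
  moreover have "insert q S \<subseteq> ?X"
  proof
    fix x assume "x \<in> insert q S"
    then consider "x = q" | "x \<in> S" by blast
    thus "x \<in> ?X"
    proof cases
      case 1
      have "q = w0 + 1 *\<^sub>R (q - w0)" by simp
      thus ?thesis using 1 w0 by blast
    next
      case 2
      have "x = x + 0 *\<^sub>R (q - w0)" by simp
      thus ?thesis using 2 hull_subset[of S affine] by blast
    qed
  qed
  ultimately have "affine hull (insert q S) \<subseteq> ?X" by (rule hull_minimal[rotated])
  thus ?thesis using y by blast
qed

lemma alt_transfer: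
  fixes \<tau> :: "'a::euclidean_space set"
  assumes fin: "finite \<tau>" and a: "a \<in> \<tau>" and q: "q \<in> \<tau>" and aq: "a \<noteq> q"
    and ne: "\<tau> - {a, q} \<noteq> {}"
  shows "altitude q \<tau> * (altitude a (\<tau> - {q}) - altitude a \<tau>) \<le> altitude a \<tau> * simplex_L \<tau>"
proof -
  define S where "S = \<tau> - {a, q}"
  define A where "A = affine hull S"
  obtain w0 where w0: "w0 \<in> S" using ne S_def by blast
  have w0A: "w0 \<in> A" using w0 hull_subset[of S affine] A_def by blast
  have ta: "\<tau> - {a} = insert q S" using q aq S_def by auto
  have tq: "\<tau> - {q} = insert a S" using a aq S_def by auto
  have tqa: "\<tau> - {q} - {a} = S" using S_def by auto
  obtain a' where a': "a' \<in> affine hull (\<tau> - {a})" "infdist a (affine hull (\<tau> - {a})) = dist a a'"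
    using proj_affine[of "affine hull (\<tau> - {a})" a] q aq by auto
  have alta: "altitude a \<tau> = dist a a'" using a' by (simp add: altitude_def)
  obtain z l where zl: "z \<in> A" "a' = z + l *\<^sub>R (q - w0)"
    using aff_rep[OF w0A[unfolded A_def], of a' q] a'(1) ta A_def by auto
  have altaq: "altitude a (\<tau> - {q}) = infdist a A" by (simp add: altitude_def tqa A_def)
  have L: "dist q w0 \<le> simplex_L \<tau>" using simplex_L_ge[OF fin q, of w0] w0 S_def by blast
  have i1: "infdist a' A \<le> \<bar>l\<bar> * simplex_L \<tau>"
  proof -
    have "infdist a' A \<le> dist a' z" by (rule infdist_le[OF zl(1)])
    also have "\<dots> = \<bar>l\<bar> * dist q w0" using zl(2) by (simp add: dist_norm)
    also have "\<dots> \<le> \<bar>l\<bar> * simplex_L \<tau>" using L by (simp add: mult_left_mono)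
    finally show ?thesis .
  qed
  have i2: "infdist a A \<le> infdist a' A + dist a a'" by (rule infdist_triangle)
  have Lnn: "simplex_L \<tau> \<ge> 0" using simplex_L_ge[OF fin q q] by simp
  have altq_nn: "altitude q \<tau> \<ge> 0" by (rule altitude_nonneg)
  show ?thesis
  proof (cases "l = 0")
    case True
    hence "altitude a (\<tau> - {q}) - altitude a \<tau> \<le> 0" using i1 i2 altaq alta by simp
    hence "altitude q \<tau> * (altitude a (\<tau> - {q}) - altitude a \<tau>) \<le> 0"
      using altq_nn by (simp add: mult_nonneg_nonpos)
    also have "0 \<le> altitude a \<tau> * simplex_L \<tau>" using Lnn altitude_nonneg[of a \<tau>] by simp
    finally show ?thesis .
  next
    case False
    define q'' where "q'' = w0 + (1 / l) *\<^sub>R (a - z)"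
    have "q'' \<in> affine hull (\<tau> - {q})"
    proof -
      have "affine hull S \<subseteq> affine hull (\<tau> - {q})" by (rule hull_mono) (auto simp: tq)
      hence "w0 \<in> affine hull (\<tau> - {q})" "z \<in> affine hull (\<tau> - {q})" using w0A zl(1) A_def by auto
      moreover have "a \<in> affine hull (\<tau> - {q})" using tq hull_subset[of "\<tau> - {q}" affine] by auto
      ultimately show ?thesis unfolding q''_def by (intro mem_affine_3_minus) auto
    qed
    hence "altitude q \<tau> \<le> dist q q''" by (simp add: altitude_def infdist_le)
    also have "q - q'' = (1 / l) *\<^sub>R (a' - a)"
      using False by (simp add: q''_def zl(2) algebra_simps)
    hence "dist q q'' = dist a a' / \<bar>l\<bar>" by (simp add: dist_norm norm_minus_commute)
    finally have aq1: "altitude q \<tau> * \<bar>l\<bar> \<le> dist a a'" using False by (simp add: pos_le_divide_eq)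
    have d: "altitude a (\<tau> - {q}) - altitude a \<tau> \<le> \<bar>l\<bar> * simplex_L \<tau>" using i1 i2 altaq alta by simp
    have "altitude q \<tau> * (altitude a (\<tau> - {q}) - altitude a \<tau>) \<le> altitude q \<tau> * (\<bar>l\<bar> * simplex_L \<tau>)"
      by (rule mult_left_mono[OF d altq_nn])
    also have "\<dots> = (altitude q \<tau> * \<bar>l\<bar>) * simplex_L \<tau>" by simp
    also have "\<dots> \<le> dist a a' * simplex_L \<tau>" by (rule mult_right_mono[OF aq1 Lnn])
    finally show ?thesis using alta by simp
  qed
qed



lemma dist_sq_via:
  fixes a b c :: "'a::real_inner"
  shows "(dist a b)\<^sup>2 = (dist a c)\<^sup>2 - 2 * inner (a - c) (b - c) + (dist b c)\<^sup>2"
proof -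
  have "a - b = (a - c) - (b - c)" by simp
  hence "(dist a b)\<^sup>2 = (norm ((a - c) - (b - c)))\<^sup>2" by (simp add: dist_norm)
  also have "\<dots> = (dist a c)\<^sup>2 - 2 * inner (a - c) (b - c) + (dist b c)\<^sup>2"
    by (simp only: sq_diff dist_norm)
  finally show ?thesis .
qed

lemma sphere_witness:
  fixes y :: "'a::euclidean_space"
  assumes A: "affine A" and y: "y \<in> A" and q: "q \<in> A" and rho: "\<rho> \<ge> 0"
    and v0: "v0 \<in> A" "dist v0 y = \<rho>"
  shows "infdist q (sphere y \<rho> \<inter> A) \<le> \<bar>dist q y - \<rho>\<bar>"
proof (cases "q = y")
  case True
  have "v0 \<in> sphere y \<rho> \<inter> A" using v0 by (simp add: dist_commute)
  hence "infdist q (sphere y \<rho> \<inter> A) \<le> dist q v0" by (rule infdist_le)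
  thus ?thesis using True v0 rho by (simp add: dist_commute)
next
  case False
  define z where "z = y + (\<rho> / dist q y) *\<^sub>R (q - y)"
  have zA: "z \<in> A" unfolding z_def by (rule mem_affine_3_minus[OF A y q y])
  have dqy: "dist q y > 0" using False by simp
  have "dist y z = \<rho>" using dqy rho by (simp add: z_def dist_norm dist_commute)
  hence zS: "z \<in> sphere y \<rho> \<inter> A" using zA by simp
  have "q - z = (1 - \<rho> / dist q y) *\<^sub>R (q - y)" by (simp add: z_def algebra_simps)
  hence "dist q z = \<bar>1 - \<rho> / dist q y\<bar> * dist q y" by (simp add: dist_norm)
  also have "\<dots> = \<bar>(1 - \<rho> / dist q y) * dist q y\<bar>" using dqy by (simp add: abs_mult)
  also have "(1 - \<rho> / dist q y) * dist q y = dist q y - \<rho>" using dqy by (simp add: field_simps)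
  finally show ?thesis using infdist_le[OF zS, of q] by simp
qed

lemma sq_gap:
  fixes a r :: real
  assumes "a \<ge> 0" "r \<ge> 0"
  shows "\<bar>a - r\<bar> * r \<le> \<bar>a\<^sup>2 - r\<^sup>2\<bar>"
proof -
  have "a\<^sup>2 - r\<^sup>2 = (a - r) * (a + r)" by (simp add: power2_eq_square algebra_simps)
  hence "\<bar>a\<^sup>2 - r\<^sup>2\<bar> = \<bar>a - r\<bar> * (a + r)" using assms by (simp add: abs_mult)
  moreover have "\<bar>a - r\<bar> * r \<le> \<bar>a - r\<bar> * (a + r)" using assms by (simp add: mult_left_mono)
  ultimately show ?thesis by simp
qed



lemma abs_combo:
  fixes X a b d i j u w :: real
  assumes "X = a - b - d + 2 * i - 2 * j" "\<bar>i\<bar> \<le> u" "\<bar>j\<bar> \<le> w"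
  shows "\<bar>X\<bar> \<le> \<bar>a - b\<bar> + \<bar>d\<bar> + 2 * u + 2 * w"
  using assms by linarith

lemma facet_circ:
  fixes \<tau> :: "'a::euclidean_space set"
  assumes fin: "finite \<tau>" and c3: "card \<tau> \<ge> 3" and p: "p \<in> \<tau>" and q: "q \<in> \<tau>"
    and sph: "\<tau> - {p} \<subseteq> sphere C R" and T0: "T \<ge> 0"
    and Tq: "q \<noteq> p \<Longrightarrow> \<bar>(dist p C)\<^sup>2 - R\<^sup>2\<bar> \<le> 2 * T * altitude p (\<tau> - {q})"
    and Dp: "q \<noteq> p \<Longrightarrow> altitude p (\<tau> - {q}) > 0"
  obtains y \<rho> where "y \<in> affine hull (\<tau> - {q})" "\<tau> - {q} \<subseteq> sphere y \<rho>" "\<rho> \<le> R + T" "\<rho> \<ge> 0"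
    "infdist q (sphere y \<rho> \<inter> affine hull (\<tau> - {q})) * \<rho> \<le> altitude q \<tau> * \<rho> + \<bar>(dist q C)\<^sup>2 - R\<^sup>2\<bar>
        + (altitude q \<tau>)\<^sup>2 + 2 * altitude q \<tau> * R + 2 * simplex_L \<tau> * T"
proof -
  define Aq where "Aq = affine hull (\<tau> - {q})"
  have affA: "affine Aq" by (simp add: Aq_def)
  have subA: "\<tau> - {q} \<subseteq> Aq" unfolding Aq_def by (rule hull_subset)
  have ne2: "\<tau> - {p, q} \<noteq> {}"
  proof
    assume "\<tau> - {p, q} = {}"
    hence "\<tau> \<subseteq> {p, q}" by blast
    hence "card \<tau> \<le> card {p, q}" by (simp add: card_mono)
    also have "\<dots> \<le> 2" by (simp add: card_insert_le_m1)
    finally show False using c3 by simp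
  qed
  obtain v0 where v0: "v0 \<in> \<tau>" "v0 \<noteq> p" "v0 \<noteq> q" using ne2 by blast
  have v0C: "dist v0 C = R" using sph v0 by (auto simp: subset_iff dist_commute)
  have R0: "R \<ge> 0" using v0C by (metis zero_le_dist)
  have v0A: "v0 \<in> Aq" using subA v0 by blast
  obtain C' where C': "C' \<in> Aq" "infdist C Aq = dist C C'" "\<And>z. z \<in> Aq \<Longrightarrow> inner (C - C') (z - C') = 0"
    using proj_affine[OF affA] v0A unfolding Aq_def by (metis closed_affine_hull empty_iff)
  define h where "h = dist C C'"
  have pyth: "(dist z C)\<^sup>2 = (dist z C')\<^sup>2 + h\<^sup>2" if "z \<in> Aq" for z
    using dist_sq_via[of z C C'] C'(3)[OF that] by (simp add: h_def inner_commute dist_commute)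
  have hR: "h \<le> R" using infdist_le[OF v0A, of C] C'(2) v0C by (simp add: h_def dist_commute)
  have h0: "h \<ge> 0" by (simp add: h_def)
  have v0C': "(dist v0 C')\<^sup>2 = R\<^sup>2 - h\<^sup>2" using pyth[OF v0A] v0C by simp
  obtain y where y: "y \<in> Aq" "\<And>w. w \<in> \<tau> - {q} \<Longrightarrow> dist w y = dist v0 y" "dist y C' \<le> T"
  proof (cases "q = p")
    case True
    have "dist w C' = dist v0 C'" if w: "w \<in> \<tau> - {q}" for w
    proof -
      have "dist w C = R" using sph w True by (auto simp: subset_iff dist_commute)
      hence "(dist w C')\<^sup>2 = (dist v0 C')\<^sup>2" using pyth[of w] w subA v0C' by auto
      thus ?thesis by (simp add: power2_eq_iff_nonneg)
    qed
    thus ?thesis using that[of C'] C'(1) T0 by auto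
  next
    case False
    define B where "B = affine hull (\<tau> - {q} - {p})"
    have affB: "affine B" by (simp add: B_def)
    have v0B: "v0 \<in> B" unfolding B_def using v0 hull_subset[of "\<tau> - {q} - {p}" affine] by blast
    obtain \<pi> where pi: "\<pi> \<in> B" "infdist p B = dist p \<pi>" "\<And>z. z \<in> B \<Longrightarrow> inner (p - \<pi>) (z - \<pi>) = 0"
      using proj_affine[OF affB] v0B unfolding B_def by (metis closed_affine_hull empty_iff)
    have BA: "B \<subseteq> Aq" unfolding B_def Aq_def by (rule hull_mono) blast
    have pA: "p \<in> Aq" using subA p False by blast
    define \<nu> where "\<nu> = p - \<pi>"
    have nu_norm: "norm \<nu> = altitude p (\<tau> - {q})"
      using pi(2) by (simp add: altitude_def B_def \<nu>_def dist_norm)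
    have nupos: "norm \<nu> > 0" using nu_norm Dp[OF False] by simp
    define t where "t = ((dist p C')\<^sup>2 - (dist v0 C')\<^sup>2) / (2 * (norm \<nu>)\<^sup>2)"
    define y where "y = C' + t *\<^sub>R \<nu>"
    have yA: "y \<in> Aq" unfolding y_def \<nu>_def
      by (rule mem_affine_3_minus[OF affA C'(1) pA]) (use BA pi(1) in blast)
    define \<beta> where "\<beta> = inner (\<pi> - C') \<nu>"
    have wy: "(dist w y)\<^sup>2 = (dist v0 C')\<^sup>2 - 2 * t * \<beta> + t\<^sup>2 * (norm \<nu>)\<^sup>2" if w: "w \<in> \<tau> - {q} - {p}" for w
    proof -
      have wB: "w \<in> B" unfolding B_def using w hull_subset[of "\<tau> - {q} - {p}" affine] by blast
      have "inner (w - C') \<nu> = inner (w - \<pi>) \<nu> + \<beta>" by (simp add: \<beta>_def inner_diff_left)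
      also have "inner (w - \<pi>) \<nu> = 0" using pi(3)[OF wB] by (simp add: \<nu>_def inner_commute)
      finally have i: "inner (w - C') \<nu> = \<beta>" by simp
      have wC: "dist w C = R" using sph w by (auto simp: subset_iff dist_commute)
      have "(dist w C')\<^sup>2 = (dist v0 C')\<^sup>2" using pyth[of w] w subA wC v0C' by auto
      moreover have "(dist w y)\<^sup>2 = (dist w C')\<^sup>2 - 2 * inner (w - C') (y - C') + (dist y C')\<^sup>2"
        by (rule dist_sq_via)
      moreover have "inner (w - C') (y - C') = t * inner (w - C') \<nu>" by (simp add: y_def)
      moreover have "(dist y C')\<^sup>2 = t\<^sup>2 * (norm \<nu>)\<^sup>2" by (simp add: y_def dist_norm power_mult_distrib)
      ultimately show ?thesis using i by simp
    qed
    have py: "(dist p y)\<^sup>2 = (dist v0 C')\<^sup>2 - 2 * t * \<beta> + t\<^sup>2 * (norm \<nu>)\<^sup>2"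
    proof -
      have i: "inner (p - C') \<nu> = (norm \<nu>)\<^sup>2 + \<beta>"
      proof -
        have "inner (p - C') \<nu> = inner \<nu> \<nu> + \<beta>" by (simp add: \<beta>_def \<nu>_def inner_diff_left)
        thus ?thesis by (simp add: power2_norm_eq_inner)
      qed
      have "(dist p y)\<^sup>2 = (dist p C')\<^sup>2 - 2 * inner (p - C') (y - C') + (dist y C')\<^sup>2"
        by (rule dist_sq_via)
      moreover have "inner (p - C') (y - C') = t * inner (p - C') \<nu>" by (simp add: y_def)
      moreover have "(dist y C')\<^sup>2 = t\<^sup>2 * (norm \<nu>)\<^sup>2" by (simp add: y_def dist_norm power_mult_distrib)
      moreover have "2 * t * (norm \<nu>)\<^sup>2 = (dist p C')\<^sup>2 - (dist v0 C')\<^sup>2"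
        using nupos by (simp add: t_def)
      ultimately show ?thesis using i by (simp add: algebra_simps)
    qed
    have eqd: "dist w y = dist v0 y" if w: "w \<in> \<tau> - {q}" for w
    proof -
      have "(dist w y)\<^sup>2 = (dist v0 y)\<^sup>2"
      proof (cases "w = p")
        case True thus ?thesis using py wy[of v0] v0 by simp
      next
        case False thus ?thesis using wy[of w] wy[of v0] w v0 by simp
      qed
      thus ?thesis by (simp add: power2_eq_iff_nonneg)
    qed
    have "dist y C' = \<bar>t\<bar> * norm \<nu>" by (simp add: y_def dist_norm)
    also have "\<dots> = \<bar>(dist p C')\<^sup>2 - (dist v0 C')\<^sup>2\<bar> / (2 * norm \<nu>)"
      using nupos by (simp add: t_def abs_divide power2_eq_square)
    also have "(dist p C')\<^sup>2 - (dist v0 C')\<^sup>2 = (dist p C)\<^sup>2 - R\<^sup>2"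
      using pyth[OF pA] v0C' by simp
    also have "\<bar>(dist p C)\<^sup>2 - R\<^sup>2\<bar> / (2 * norm \<nu>) \<le> T"
      using Tq[OF False] nupos nu_norm by (simp add: divide_le_eq mult.commute mult.left_commute)
    finally show ?thesis using that[of y] yA eqd by blast
  qed
  define \<rho> where "\<rho> = dist v0 y"
  have rho0: "\<rho> \<ge> 0" by (simp add: \<rho>_def)
  have sphy: "\<tau> - {q} \<subseteq> sphere y \<rho>"
  proof
    fix w assume "w \<in> \<tau> - {q}"
    hence "dist w y = \<rho>" using y(2) \<rho>_def by blast
    thus "w \<in> sphere y \<rho>" by (simp add: dist_commute)
  qed
  have rhoR: "\<rho> \<le> R + T"
  proof -
    have "(dist v0 C')\<^sup>2 \<le> R\<^sup>2" using v0C' by simp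
    hence "dist v0 C' \<le> R" using R0 by (simp add: power2_le_iff_abs_le)
    moreover have "\<rho> \<le> dist v0 C' + dist C' y" by (simp add: \<rho>_def dist_triangle)
    ultimately show ?thesis using y(3) by (simp add: dist_commute)
  qed
  obtain q' where q': "q' \<in> Aq" "infdist q Aq = dist q q'" "\<And>z. z \<in> Aq \<Longrightarrow> inner (q - q') (z - q') = 0"
    using proj_affine[OF affA] v0A unfolding Aq_def by (metis closed_affine_hull empty_iff)
  define D where "D = dist q q'"
  have Dalt: "altitude q \<tau> = D" using q'(2) by (simp add: altitude_def Aq_def D_def)
  have D0: "D \<ge> 0" by (simp add: D_def)
  define L where "L = simplex_L \<tau>"
  have e1: "(dist q' y)\<^sup>2 = (dist q' C')\<^sup>2 - 2 * inner (q' - C') (y - C') + (dist y C')\<^sup>2"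
    by (rule dist_sq_via)
  have e2: "\<rho>\<^sup>2 = (dist v0 C')\<^sup>2 - 2 * inner (v0 - C') (y - C') + (dist y C')\<^sup>2"
    unfolding \<rho>_def by (rule dist_sq_via)
  have e3: "(dist q C)\<^sup>2 = D\<^sup>2 - 2 * inner (q - q') (C - q') + (dist C q')\<^sup>2"
    unfolding D_def by (rule dist_sq_via)
  have e4: "inner (q - q') (C - q') = inner (q - q') (C - C')"
  proof -
    have "inner (q - q') (C - q') = inner (q - q') (C - C') + inner (q - q') (C' - q')"
      by (simp add: inner_diff_right)
    thus ?thesis using q'(3)[OF C'(1)] by simp
  qed
  have e5: "(dist C q')\<^sup>2 = (dist q' C')\<^sup>2 + h\<^sup>2" using pyth[OF q'(1)] by (simp add: dist_commute)
  define X where "X = (dist q' y)\<^sup>2 - \<rho>\<^sup>2"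
  have Xeq: "X = (dist q C)\<^sup>2 - R\<^sup>2 - D\<^sup>2 + 2 * inner (q - q') (C - C') - 2 * inner (q' - v0) (y - C')"
  proof -
    have "inner (q' - C') (y - C') - inner (v0 - C') (y - C') = inner (q' - v0) (y - C')"
      by (simp add: inner_diff_left)
    thus ?thesis unfolding X_def e1 e2 v0C' using e3 e4 e5 by (simp add: algebra_simps)
  qed
  have b1: "\<bar>inner (q - q') (C - C')\<bar> \<le> D * R"
  proof -
    have "\<bar>inner (q - q') (C - C')\<bar> \<le> norm (q - q') * norm (C - C')" by (rule Cauchy_Schwarz_ineq2)
    also have "\<dots> = D * h" by (simp add: D_def h_def dist_norm)
    also have "\<dots> \<le> D * R" using hR D0 by (simp add: mult_left_mono)
    finally show ?thesis .
  qed
  have b2: "\<bar>inner (q' - v0) (y - C')\<bar> \<le> L * T"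
  proof -
    have "\<bar>inner (q' - v0) (y - C')\<bar> \<le> norm (q' - v0) * norm (y - C')" by (rule Cauchy_Schwarz_ineq2)
    also have "\<dots> \<le> L * T"
    proof (rule mult_mono)
      have "(dist q v0)\<^sup>2 = D\<^sup>2 - 2 * inner (q - q') (v0 - q') + (dist v0 q')\<^sup>2"
        unfolding D_def by (rule dist_sq_via)
      hence "(dist q v0)\<^sup>2 = D\<^sup>2 + (dist v0 q')\<^sup>2" using q'(3)[OF v0A] by simp
      hence "(dist v0 q')\<^sup>2 \<le> (dist q v0)\<^sup>2" by simp
      hence "dist v0 q' \<le> dist q v0" by (simp add: power2_le_iff_abs_le)
      also have "dist q v0 \<le> L" unfolding L_def by (rule simplex_L_ge[OF fin q v0(1)])
      finally show "norm (q' - v0) \<le> L" by (simp add: dist_norm norm_minus_commute)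
      show "norm (y - C') \<le> T" using y(3) by (simp add: dist_norm)
    qed (use simplex_L_ge[OF fin q q] in \<open>auto simp: L_def\<close>)
    finally show ?thesis .
  qed
  have Xb: "\<bar>X\<bar> \<le> \<bar>(dist q C)\<^sup>2 - R\<^sup>2\<bar> + D\<^sup>2 + 2 * D * R + 2 * L * T"
    using abs_combo[OF Xeq b1 b2] by (simp add: power2_eq_square)
  have w: "infdist q' (sphere y \<rho> \<inter> Aq) \<le> \<bar>dist q' y - \<rho>\<bar>"
    by (rule sphere_witness[OF affA y(1) q'(1) rho0 v0A]) (simp add: \<rho>_def)
  have g: "\<bar>dist q' y - \<rho>\<bar> * \<rho> \<le> \<bar>X\<bar>" unfolding X_def by (rule sq_gap) (auto simp: rho0)
  have "infdist q (sphere y \<rho> \<inter> Aq) \<le> infdist q' (sphere y \<rho> \<inter> Aq) + D"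
    using infdist_triangle[of q "sphere y \<rho> \<inter> Aq" q'] by (simp add: D_def)
  hence "infdist q (sphere y \<rho> \<inter> Aq) * \<rho> \<le> (\<bar>dist q' y - \<rho>\<bar> + D) * \<rho>"
    using w rho0 by (simp add: mult_right_mono)
  also have "\<dots> = \<bar>dist q' y - \<rho>\<bar> * \<rho> + D * \<rho>" by (simp add: algebra_simps)
  finally have fin_b: "infdist q (sphere y \<rho> \<inter> Aq) * \<rho> \<le> D * \<rho> + \<bar>(dist q C)\<^sup>2 - R\<^sup>2\<bar> + D\<^sup>2 + 2 * D * R + 2 * L * T"
    using g Xb by linarith
  show ?thesis
    by (rule that[OF y(1)[unfolded Aq_def] sphy rhoR rho0]) (use fin_b in \<open>simp add: Aq_def Dalt L_def\<close>)
qed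



lemma two_pts:
  assumes "finite X" "card X \<ge> 2"
  obtains u w where "u \<in> X" "w \<in> X" "u \<noteq> w"
  using assms by (metis card_le_Suc0_iff_eq not_less_eq_eq numeral_2_eq_2)

lemma pow_split: "(n::nat) \<ge> 3 \<Longrightarrow> (G::real) ^ (n - 1) = G * G ^ (n - 2)"
proof -
  assume "n \<ge> 3"
  hence "n - 1 = Suc (n - 2)" by simp
  thus ?thesis by simp
qed

lemma forb_core:
  fixes \<tau> :: "'a::euclidean_space set"
  assumes fin: "finite \<tau>" and fl: "flake G \<tau>"
    and G0: "0 < G" and G1: "G \<le> 1" and Gmu: "G \<le> 2 * \<mu>\<^sup>2 / 75"
    and mu0: "0 < \<mu>" and mu1: "\<mu> \<le> 1" and eps: "\<epsilon> > 0"
    and s1: "\<mu> * \<epsilon> / 2 \<le> s" and s2: "s \<le> \<mu> * \<epsilon>"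
    and sep: "\<And>u w. u \<in> \<tau> \<Longrightarrow> w \<in> \<tau> \<Longrightarrow> u \<noteq> w \<Longrightarrow> s \<le> dist u w"
    and p: "p \<in> \<tau>" and sph: "\<tau> - {p} \<subseteq> sphere C R" and Rle: "R < 5/4 * \<epsilon>"
    and pd: "\<bar>dist p C - R\<bar> \<le> \<delta>" and d0: "\<delta> \<ge> 0" and dle: "\<delta> \<le> G ^ (card \<tau> - 1) * s"
  shows "hoop (2 * (16 / \<mu>) ^ 3 * G) \<tau>"
    "\<forall>q\<in>\<tau>. has_circumball (\<tau> - {q}) \<and> circumradius (\<tau> - {q}) < 2 * \<epsilon>"
    "simplex_L \<tau> \<le> 2 * R + \<delta>"
proof -
  define n where "n = card \<tau>"
  have n3: "n \<ge> 3" unfolding n_def by (rule flake_card[OF fin fl G0 G1])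
  define L where "L = simplex_L \<tau>"
  have s0: "s > 0" using s1 mu0 eps by (smt (verit) divide_pos_pos mult_pos_pos)
  have cp: "card (\<tau> - {p}) \<ge> 2" using n3 p fin by (simp add: card_Diff_singleton n_def)
  obtain u0 w0 where uw0: "u0 \<in> \<tau> - {p}" "w0 \<in> \<tau> - {p}" "u0 \<noteq> w0"
    using two_pts[OF _ cp] fin by blast
  have "s \<le> dist u0 w0" using sep uw0 by blast
  also have "\<dots> \<le> dist u0 C + dist w0 C" by (rule dist_triangle2)
  also have "\<dots> = 2 * R"
  proof -
    have "dist u0 C = R" "dist w0 C = R" using uw0 sph by (auto simp: subset_iff dist_commute)
    thus ?thesis by simp
  qed
  finally have Rs: "s \<le> 2 * R" .
  have R0: "R \<ge> 0" using Rs s0 by linarith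
  have distC: "dist u C \<le> R + (if u = p then \<delta> else 0)" if "u \<in> \<tau>" for u
    using that sph pd by (cases "u = p") (auto simp: subset_iff dist_commute)
  have Lb: "L \<le> 2 * R + \<delta>"
    unfolding L_def
  proof (rule simplex_L_le[OF fin])
    show "\<tau> \<noteq> {}" using p by blast
    fix u w assume u: "u \<in> \<tau>" and w: "w \<in> \<tau>"
    show "dist u w \<le> 2 * R + \<delta>"
    proof (cases "u = w")
      case True thus ?thesis
        using R0 d0 by simp
    next
      case False
      have "dist u w \<le> dist u C + dist w C" by (rule dist_triangle2)
      thus ?thesis using distC[OF u] distC[OF w] False d0 by (auto split: if_splits)
    qed
  qed
  thus Lres: "simplex_L \<tau> \<le> 2 * R + \<delta>" by (simp add: L_def)
  have mu2: "\<mu>\<^sup>2 \<le> \<mu>" using mu0 mu1 by (simp add: power2_eq_square mult_left_le)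
  have Gmu': "G \<le> 2 * \<mu> / 75" using Gmu mu2 by linarith
  have Gpow: "G ^ (n - 1) \<le> G" using power_decreasing[of 1 "n - 1" G] G0 G1 n3 by simp
  have Lge: "s \<le> L" using sep[of u0 w0] uw0 simplex_L_ge[OF fin, of u0 w0] by (auto simp: L_def)
  have L0: "L \<ge> 0" using Lge s0 by linarith
  define g where "g = G ^ (n - 2) * real (n - 2)"
  have g0: "g > 0" using G0 n3 by (simp add: g_def)
  have gG: "G ^ (n - 2) \<le> g" using G0 n3 by (simp add: g_def)
  have facet_alt: "altitude v (\<tau> - {q}) \<ge> g * s" if q: "q \<in> \<tau>" and v: "v \<in> \<tau> - {q}" for q v
  proof -
    have cq: "card (\<tau> - {q}) = n - 1" using q fin by (simp add: n_def card_Diff_singleton)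
    have cq2: "card (\<tau> - {q}) \<ge> 2" using cq n3 by simp
    have fq: "finite (\<tau> - {q})" using fin by simp
    have gq: "good G (\<tau> - {q})" using flake_facet_good[OF fl q _ fin] n3 by (simp add: n_def)
    obtain u w where uw: "u \<in> \<tau> - {q}" "w \<in> \<tau> - {q}" "u \<noteq> w" using two_pts[OF fq cq2] by blast
    have "s \<le> simplex_L (\<tau> - {q})" using sep[of u w] uw simplex_L_ge[OF fq uw(1,2)] by auto
    hence "g * s \<le> g * simplex_L (\<tau> - {q})" using g0 by simp
    also have "\<dots> = G ^ (card (\<tau> - {q}) - 1) * real (card (\<tau> - {q}) - 1) * simplex_L (\<tau> - {q})"
    proof -
      have "card (\<tau> - {q}) - 1 = n - 2" using cq by simp
      thus ?thesis by (simp only: g_def mult.assoc)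
    qed
    also have "\<dots> \<le> altitude v (\<tau> - {q})" by (rule good_alt[OF fq cq2 gq v])
    finally show ?thesis .
  qed
  have c2: "card \<tau> \<ge> 2" using n3 by (simp add: n_def)
  obtain a where a: "a \<in> \<tau>" "altitude a \<tau> < G ^ (card \<tau> - 1) * real (card \<tau> - 1) * simplex_L \<tau>"
    using notgood_alt[OF fin c2 flake_notgood_self[OF fl]] by blast
  have Gn1: "G ^ (n - 1) * real (n - 1) \<le> 2 * G * g"
  proof -
    have e: "G ^ (n - 1) = G * G ^ (n - 2)" using n3 by (rule pow_split)
    have "real (n - 1) \<le> 2 * real (n - 2)" using n3 by linarith
    hence "G * G ^ (n - 2) * real (n - 1) \<le> G * G ^ (n - 2) * (2 * real (n - 2))"
      using G0 by (simp add: mult_left_mono)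
    thus ?thesis using e by (simp add: g_def algebra_simps)
  qed
  have alta: "altitude a \<tau> \<le> 2 * G * g * L"
  proof -
    have "altitude a \<tau> \<le> G ^ (n - 1) * real (n - 1) * L" using a(2) by (simp add: n_def L_def)
    also have "\<dots> \<le> 2 * G * g * L" using Gn1 L0 by (simp add: mult_right_mono)
    finally show ?thesis .
  qed
  have g1: "g \<le> 1"
  proof -
    have k: "real (n - 2) \<le> 2 ^ (n - 2)" using of_nat_less_two_power[of "n - 2", where 'a=real] by simp
    have "G \<le> 1/2" using Gmu' mu1 by linarith
    hence "G ^ (n - 2) \<le> (1/2) ^ (n - 2)" using G0 by (simp add: power_mono)
    hence "g \<le> (1/2) ^ (n - 2) * 2 ^ (n - 2)" unfolding g_def
      using k G0 by (intro mult_mono) auto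
    also have "\<dots> = 1" by (simp add: power_mult_distrib[symmetric])
    finally show ?thesis .
  qed
  have "G ^ (n - 1) * s \<le> G * s" by (rule mult_right_mono[OF Gpow]) (use s0 in simp)
  hence dG: "\<delta> \<le> G * s" using dle by (simp add: n_def)
  have Gs: "G * s \<le> 2/75 * \<epsilon>"
  proof -
    have "G * s \<le> (2 * \<mu> / 75) * (\<mu> * \<epsilon>)" using Gmu' s2 G0 s0 by (intro mult_mono) auto
    also have "\<dots> = 2/75 * (\<mu> * \<mu>) * \<epsilon>" by simp
    also have "\<dots> \<le> 2/75 * 1 * \<epsilon>" using mu0 mu1 eps
      by (intro mult_right_mono mult_left_mono) (auto simp: mult_le_one)
    finally show ?thesis by simp
  qed
  have dsmall: "\<delta> \<le> 2/75 * \<epsilon>" using dG Gs by linarith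
  have Lnum: "L \<le> 13/5 * \<epsilon>" using Lb Rle dsmall eps by linarith
  have GL: "2 * G * L \<le> 52/375 * \<mu> * \<epsilon>"
  proof -
    have "G * L \<le> (2 * \<mu>\<^sup>2 / 75) * (13/5 * \<epsilon>)" using Gmu Lnum G0 L0 by (intro mult_mono) auto
    also have "\<dots> = 26/375 * \<mu>\<^sup>2 * \<epsilon>" by simp
    also have "\<dots> \<le> 26/375 * \<mu> * \<epsilon>" using mu2 eps by (intro mult_right_mono) auto
    finally show ?thesis by (simp add: algebra_simps)
  qed
  have me: "\<mu> * \<epsilon> > 0" using mu0 eps by simp
  have GL': "2 * G * L \<le> 52/375 * (\<mu> * \<epsilon>)" using GL by (simp add: mult.assoc)
  have gap': "s - 2 * G * L \<ge> 9/25 * (\<mu> * \<epsilon>)" using GL' s1 me by linarith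
  hence gap: "s - 2 * G * L \<ge> 9/25 * \<mu> * \<epsilon>" by (simp add: mult.assoc)
  have Dgen: "altitude q \<tau> * (s - 2 * G * L) \<le> 2 * G * L\<^sup>2" if q: "q \<in> \<tau>" for q
  proof (cases "q = a")
    case True
    have "altitude q \<tau> * (s - 2 * G * L) \<le> (2 * G * L) * L"
    proof (rule mult_mono)
      show "altitude q \<tau> \<le> 2 * G * L" using alta g1 G0 L0 True
        by (smt (verit) mult_left_le mult_nonneg_nonneg mult_right_mono)
      show "s - 2 * G * L \<le> L" using Lge G0 L0 by (smt (verit) mult_nonneg_nonneg)
    qed (use G0 L0 altitude_nonneg gap' me in auto)
    thus ?thesis by (simp add: power2_eq_square mult.assoc)
  next
    case False
    have ne: "\<tau> - {a, q} \<noteq> {}"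
    proof
      assume "\<tau> - {a, q} = {}"
      hence "\<tau> \<subseteq> {a, q}" by blast
      hence "card \<tau> \<le> card {a, q}" by (simp add: card_mono)
      also have "\<dots> \<le> 2" by (simp add: card_insert_le_m1)
      finally show False using n3 by (simp add: n_def)
    qed
    have tr: "altitude q \<tau> * (altitude a (\<tau> - {q}) - altitude a \<tau>) \<le> altitude a \<tau> * L"
      using alt_transfer[OF fin a(1) q] False ne by (simp add: L_def)
    have "altitude a (\<tau> - {q}) - altitude a \<tau> \<ge> g * (s - 2 * G * L)"
      using facet_alt[OF q, of a] a(1) False alta by (simp add: algebra_simps)
    hence "altitude q \<tau> * (g * (s - 2 * G * L)) \<le> altitude q \<tau> * (altitude a (\<tau> - {q}) - altitude a \<tau>)"
      by (rule mult_left_mono[OF _ altitude_nonneg])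
    also have "\<dots> \<le> altitude a \<tau> * L" by (rule tr)
    also have "\<dots> \<le> (2 * G * g * L) * L" using alta L0 by (simp add: mult_right_mono)
    finally have "g * (altitude q \<tau> * (s - 2 * G * L)) \<le> g * (2 * G * L\<^sup>2)"
      by (simp add: power2_eq_square algebra_simps)
    thus ?thesis using g0 by simp
  qed
  have Dmu: "altitude q \<tau> * \<mu> \<le> 38 * G * \<epsilon>" if q: "q \<in> \<tau>" for q
  proof -
    have "altitude q \<tau> * (9/25 * \<mu> * \<epsilon>) \<le> altitude q \<tau> * (s - 2 * G * L)"
      by (rule mult_left_mono[OF gap altitude_nonneg])
    also have "\<dots> \<le> 2 * G * L\<^sup>2" by (rule Dgen[OF q])
    also have "\<dots> \<le> 2 * G * (13/5 * \<epsilon>)\<^sup>2" using Lnum L0 G0 by (simp add: power_mono)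
    finally have "(altitude q \<tau> * \<mu>) * \<epsilon> * 9 \<le> (338/9 * G * \<epsilon>) * \<epsilon> * 9"
      by (simp add: power2_eq_square algebra_simps)
    hence "altitude q \<tau> * \<mu> \<le> 338/9 * G * \<epsilon>" using eps by simp
    moreover have "338/9 * (G * \<epsilon>) \<le> 38 * (G * \<epsilon>)" using G0 eps by (intro mult_right_mono) auto
    ultimately show ?thesis by (simp add: mult.assoc)
  qed
  have xC0: "dist p C \<ge> 0" by simp
  have ep: "\<bar>(dist p C)\<^sup>2 - R\<^sup>2\<bar> \<le> \<delta> * (2 * R + \<delta>)"
  proof -
    have "(dist p C)\<^sup>2 - R\<^sup>2 = (dist p C - R) * (dist p C + R)" by (simp add: power2_eq_square algebra_simps)
    hence "\<bar>(dist p C)\<^sup>2 - R\<^sup>2\<bar> = \<bar>dist p C - R\<bar> * (dist p C + R)" using R0 by (simp add: abs_mult)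
    also have "\<dots> \<le> \<delta> * (2 * R + \<delta>)" using pd R0 d0 by (intro mult_mono) (auto simp: abs_le_iff)
    finally show ?thesis .
  qed
  have eq_b: "\<bar>(dist q C)\<^sup>2 - R\<^sup>2\<bar> \<le> \<delta> * (2 * R + \<delta>)" if q: "q \<in> \<tau>" for q
  proof (cases "q = p")
    case True thus ?thesis using ep by simp
  next
    case False
    hence "dist q C = R" using q sph by (auto simp: subset_iff dist_commute)
    thus ?thesis using d0 R0 by simp
  qed
  define T where "T = \<delta> * (2 * R + \<delta>) / (2 * g * s)"
  have T0: "T \<ge> 0" using d0 R0 g0 s0 by (simp add: T_def)
  have Tq: "\<bar>(dist p C)\<^sup>2 - R\<^sup>2\<bar> \<le> 2 * T * altitude p (\<tau> - {q})" if q: "q \<in> \<tau>" "q \<noteq> p" for q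
  proof -
    have "\<delta> * (2 * R + \<delta>) = 2 * T * (g * s)" using g0 s0 by (simp add: T_def)
    also have "\<dots> \<le> 2 * T * altitude p (\<tau> - {q})" using facet_alt[OF q(1), of p] p q T0
      by (intro mult_left_mono) auto
    finally show ?thesis using ep by linarith
  qed
  have Dp: "altitude p (\<tau> - {q}) > 0" if q: "q \<in> \<tau>" "q \<noteq> p" for q
    using facet_alt[OF q(1), of p] p q g0 s0 by (smt (verit) mult_pos_pos DiffI singletonD)
  have Tb: "T \<le> 13/10 * (G * \<epsilon>)"
  proof -
    have dgs: "\<delta> \<le> G * (g * s)"
    proof -
      have "G ^ (n - 1) = G * G ^ (n - 2)" using n3
        by (rule pow_split)
      hence "\<delta> \<le> G * G ^ (n - 2) * s" using dle by (simp add: n_def)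
      also have "\<dots> \<le> G * g * s" using gG G0 s0 by (intro mult_right_mono mult_left_mono) auto
      finally show ?thesis by (simp add: mult.assoc)
    qed
    have "T \<le> G * (g * s) * (2 * R + \<delta>) / (2 * g * s)" unfolding T_def using dgs R0 d0 g0 s0
      by (intro divide_right_mono mult_right_mono) auto
    also have "\<dots> = G * (2 * R + \<delta>) / 2" using g0 s0 by (simp add: field_simps)
    also have "\<dots> \<le> G * (13/5 * \<epsilon>) / 2" using Rle dsmall G0 eps by (intro divide_right_mono mult_left_mono) auto
    finally show ?thesis by simp
  qed
  have G75: "G * \<epsilon> \<le> 2/75 * \<epsilon>" using Gmu' mu1 eps by (intro mult_right_mono) auto
  have per_q: "has_circumball (\<tau> - {q}) \<and> circumradius (\<tau> - {q}) < 2 * \<epsilon> \<and>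
     circumsphere (\<tau> - {q}) \<noteq> {} \<and>
     infdist q (circumsphere (\<tau> - {q})) \<le> 2 * (16 / \<mu>) ^ 3 * G * circumradius (\<tau> - {q})"
    if q: "q \<in> \<tau>" for q
  proof -
    obtain y \<rho> where yr: "y \<in> affine hull (\<tau> - {q})" "\<tau> - {q} \<subseteq> sphere y \<rho>" "\<rho> \<le> R + T" "\<rho> \<ge> 0"
      "infdist q (sphere y \<rho> \<inter> affine hull (\<tau> - {q})) * \<rho> \<le> altitude q \<tau> * \<rho> + \<bar>(dist q C)\<^sup>2 - R\<^sup>2\<bar>
        + (altitude q \<tau>)\<^sup>2 + 2 * altitude q \<tau> * R + 2 * simplex_L \<tau> * T"
      using facet_circ[OF fin _ p q sph T0 Tq[OF q] Dp[OF q]] n3 by (auto simp: n_def)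
    have cq2: "card (\<tau> - {q}) \<ge> 2" using n3 q fin by (simp add: n_def card_Diff_singleton)
    obtain u w where uw: "u \<in> \<tau> - {q}" "w \<in> \<tau> - {q}" "u \<noteq> w" using two_pts[OF _ cq2] fin by blast
    have rs: "s \<le> 2 * \<rho>"
    proof -
      have "s \<le> dist u w" using sep uw by blast
      also have "\<dots> \<le> dist u y + dist w y" by (rule dist_triangle2)
      also have "\<dots> = 2 * \<rho>" using uw yr(2) by (auto simp: subset_iff dist_commute)
      finally show ?thesis .
    qed
    have ne: "\<tau> - {q} \<noteq> {}" using uw by blast
    note cc = circum_char[OF ne yr(1,2)]
    have csph: "circumsphere (\<tau> - {q}) = sphere y \<rho> \<inter> affine hull (\<tau> - {q})"
      by (simp add: circumsphere_def cc)
    have csne: "circumsphere (\<tau> - {q}) \<noteq> {}"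
      using uw yr(2) hull_subset[of "\<tau> - {q}" affine] unfolding csph by blast
    have rho_le: "\<rho> \<le> 13/10 * \<epsilon>" using yr(3) Rle Tb G75 eps by linarith
    have r2: "\<rho> < 2 * \<epsilon>" using rho_le eps by linarith
    define D where "D = altitude q \<tau>"
    have D0: "D \<ge> 0" by (simp add: D_def altitude_nonneg)
    have DM: "D * \<mu> \<le> 38 * (G * \<epsilon>)" using Dmu[OF q] by (simp add: D_def mult.assoc)
    have Deps: "D \<le> 76/75 * \<epsilon>"
    proof -
      have "D * \<mu> \<le> 38 * ((2 * \<mu>\<^sup>2 / 75) * \<epsilon>)" using DM Gmu eps
        by (smt (verit) mult_right_mono mult_left_mono)
      hence "D * \<mu> \<le> (76/75 * \<epsilon> * \<mu>) * \<mu>" by (simp add: power2_eq_square algebra_simps)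
      hence "D \<le> 76/75 * \<epsilon> * \<mu>" using mu0 by (simp add: mult_le_cancel_right)
      also have "\<dots> \<le> 76/75 * \<epsilon> * 1" using mu1 eps by (intro mult_left_mono) auto
      finally show ?thesis by simp
    qed
    define K where "K = G * (\<epsilon> * \<epsilon>)"
    have K0: "K > 0" using G0 eps by (simp add: K_def)
    define e where "e = \<bar>(dist q C)\<^sup>2 - R\<^sup>2\<bar>"
    have e0: "e \<ge> 0" by (simp add: e_def)
    have eb: "e \<le> 13/5 * K"
    proof -
      have "e \<le> \<delta> * (2 * R + \<delta>)" using eq_b[OF q] by (simp add: e_def)
      also have "\<dots> \<le> (G * \<epsilon>) * (13/5 * \<epsilon>)"
      proof (rule mult_mono)
        have "G * s \<le> G * (\<mu> * \<epsilon>)" using s2 G0 by simp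
        also have "\<dots> \<le> G * (1 * \<epsilon>)" using mu1 G0 eps by (intro mult_left_mono mult_right_mono) auto
        finally show "\<delta> \<le> G * \<epsilon>" using dG by simp
        show "2 * R + \<delta> \<le> 13/5 * \<epsilon>" using Rle dsmall eps by linarith
      qed (use G0 eps R0 d0 in auto)
      finally show ?thesis by (simp add: K_def)
    qed
    have t1: "D * \<rho> * \<mu> \<le> 494/10 * K"
    proof -
      have "D * \<rho> * \<mu> = (D * \<mu>) * \<rho>" by simp
      also have "\<dots> \<le> (38 * (G * \<epsilon>)) * (13/10 * \<epsilon>)" 
        by (rule mult_mono) (use DM rho_le D0 mu0 yr(4) G0 eps in auto)
      finally show ?thesis by (simp add: K_def)
    qed
    have t2: "e * \<mu> \<le> 13/5 * K" using eb e0 mu1 by (smt (verit) mult_left_le)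
    have t3: "D\<^sup>2 * \<mu> \<le> 3851/100 * K"
    proof -
      have "D\<^sup>2 * \<mu> = (D * \<mu>) * D" by (simp add: power2_eq_square)
      also have "\<dots> \<le> (38 * (G * \<epsilon>)) * (76/75 * \<epsilon>)" 
        by (rule mult_mono) (use DM Deps D0 mu0 G0 eps G0 eps in auto)
      finally have "D\<^sup>2 * \<mu> \<le> 2888/75 * K" by (simp add: K_def)
      thus ?thesis using K0 by linarith
    qed
    have t4: "2 * D * R * \<mu> \<le> 95 * K"
    proof -
      have "2 * D * R * \<mu> = 2 * (D * \<mu>) * R" by simp
      also have "\<dots> \<le> 2 * (38 * (G * \<epsilon>)) * (5/4 * \<epsilon>)" 
        by (rule mult_mono) (use DM Rle D0 mu0 G0 eps R0 G0 eps in auto)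
      finally show ?thesis by (simp add: K_def)
    qed
    have t5: "2 * L * T * \<mu> \<le> 676/100 * K"
    proof -
      have "2 * L * T * \<mu> \<le> 2 * L * T" using L0 T0 mu1 by (simp add: mult_left_le)
      also have "\<dots> \<le> 2 * (13/5 * \<epsilon>) * (13/10 * (G * \<epsilon>))" 
        by (rule mult_mono) (use Lnum Tb L0 T0 eps G0 eps in auto)
      finally show ?thesis by (simp add: K_def)
    qed
    define RHS where "RHS = D * \<rho> + e + D\<^sup>2 + 2 * D * R + 2 * L * T"
    have RHSb: "RHS * \<mu> \<le> 512 * K"
    proof -
      have "RHS * \<mu> = D * \<rho> * \<mu> + e * \<mu> + D\<^sup>2 * \<mu> + 2 * D * R * \<mu> + 2 * L * T * \<mu>"
        by (simp add: RHS_def algebra_simps)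
      thus ?thesis using t1 t2 t3 t4 t5 K0 by linarith
    qed
    define \<alpha> where "\<alpha> = 2 * (16 / \<mu>) ^ 3 * G"
    have rpos: "\<rho> > 0" using rs s0 by linarith
    have arho: "512 * K \<le> \<alpha> * \<rho>\<^sup>2 * \<mu>"
    proof -
      have "(\<mu> * \<epsilon> / 4)\<^sup>2 \<le> \<rho>\<^sup>2" using rs s1 me by (intro power_mono) auto
      hence "\<alpha> * \<mu> * (\<mu> * \<epsilon> / 4)\<^sup>2 \<le> \<alpha> * \<mu> * \<rho>\<^sup>2"
        using G0 mu0 by (intro mult_left_mono) (auto simp: \<alpha>_def)
      moreover have "\<alpha> * \<mu> * (\<mu> * \<epsilon> / 4)\<^sup>2 = 512 * K"
        using mu0 by (simp add: \<alpha>_def K_def power2_eq_square power3_eq_cube field_simps)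
      ultimately show ?thesis by (simp add: algebra_simps)
    qed
    have "infdist q (circumsphere (\<tau> - {q})) * \<rho> \<le> RHS"
      using yr(5) unfolding csph RHS_def D_def e_def L_def by simp
    also have "RHS \<le> \<alpha> * \<rho>\<^sup>2" using RHSb arho mu0 by (smt (verit) mult_le_cancel_right)
    finally have "infdist q (circumsphere (\<tau> - {q})) * \<rho> \<le> (\<alpha> * \<rho>) * \<rho>"
      by (simp add: power2_eq_square mult.assoc)
    hence hp: "infdist q (circumsphere (\<tau> - {q})) \<le> \<alpha> * \<rho>" using rpos by simp
    show ?thesis using cc r2 csne hp by (simp add: \<alpha>_def)
  qed
  show "\<forall>q\<in>\<tau>. has_circumball (\<tau> - {q}) \<and> circumradius (\<tau> - {q}) < 2 * \<epsilon>"
    using per_q by blast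
  show "hoop (2 * (16 / \<mu>) ^ 3 * G) \<tau>"
    unfolding hoop_def using per_q by blast
qed


lemma del_radius:
  fixes P P' :: "'a::euclidean_space set"
  assumes fin: "finite P" and dense: "eps_dense P \<epsilon>" and eps: "\<epsilon> > 0"
    and bij: "bij_betw \<zeta> P P'" and zd: "\<And>p. p \<in> P \<Longrightarrow> dist (\<zeta> p) p \<le> \<rho> * \<epsilon>" and rho: "\<rho> > 0"
    and x: "x \<in> D_eps P' ((1 + \<rho>) * \<epsilon>)"
  shows "\<exists>z\<in>P'. dist x z < (1 + \<rho>) * \<epsilon>"
proof -
  define K where "K = convex hull P"
  define K' where "K' = convex hull P'"
  have P'eq: "P' = \<zeta> ` P" using bij by (simp add: bij_betw_def)
  have finP': "finite P'" using fin P'eq by simp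
  have xK': "x \<in> K'" and xf: "infdist x (frontier K') \<ge> (1 + \<rho>) * \<epsilon>"
    using x by (auto simp: D_eps_def K'_def)
  have cK: "closed K" "convex K" unfolding K_def
    using fin by (auto simp: finite_imp_compact_convex_hull compact_imp_closed)
  have cK': "closed K'" "convex K'" unfolding K'_def
    using finP' by (auto simp: finite_imp_compact_convex_hull compact_imp_closed)
  have b1: "ball x ((1 + \<rho>) * \<epsilon>) \<subseteq> K'"
  proof
    fix y assume y: "y \<in> ball x ((1 + \<rho>) * \<epsilon>)"
    show "y \<in> K'"
    proof (rule ccontr)
      assume yn: "y \<notin> K'"
      have "closed_segment x y \<inter> frontier K' \<noteq> {}"
        by (rule connected_Int_frontier) (use xK' yn in auto)
      then obtain f where f: "f \<in> closed_segment x y" "f \<in> frontier K'" by blast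
      have "dist f x \<le> dist x y" using dist_in_closed_segment[OF f(1)] by simp
      hence "infdist x (frontier K') < (1 + \<rho>) * \<epsilon>"
        using infdist_le[OF f(2), of x] y by (simp add: dist_commute)
      thus False using xf by simp
    qed
  qed
  have b2: "ball x \<epsilon> \<subseteq> K"
  proof
    fix y assume y: "y \<in> ball x \<epsilon>"
    show "y \<in> K"
    proof (rule ccontr)
      assume yn: "y \<notin> K"
      obtain a b where ab: "inner a y < b" "\<And>k. k \<in> K \<Longrightarrow> inner a k > b"
        using separating_hyperplane_closed_point[OF cK(2,1) yn] by blast
      have a0: "a \<noteq> 0"
      proof
        assume "a = 0"
        moreover obtain k0 where "k0 \<in> P" using xK' P'eq K'_def by fastforce
        hence "k0 \<in> K" unfolding K_def by (simp add: hull_inc)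
        ultimately show False using ab(1) ab(2)[of k0] by simp
      qed
      define w where "w = y - (\<rho> * \<epsilon> / norm a) *\<^sub>R a"
      have "dist x w \<le> dist x y + dist y w" by (rule dist_triangle)
      also have "dist y w = \<rho> * \<epsilon>" using a0 rho eps by (simp add: w_def dist_norm)
      finally have "dist x w < (1 + \<rho>) * \<epsilon>" using y by (simp add: algebra_simps)
      hence wK': "w \<in> K'" using b1 by auto
      have "P' \<subseteq> {k. inner a k \<ge> b - norm a * (\<rho> * \<epsilon>)}"
      proof
        fix k assume "k \<in> P'"
        then obtain p where p: "p \<in> P" "k = \<zeta> p" using P'eq by blast
        have "inner a p > b" using ab(2)[of p] p(1) unfolding K_def by (simp add: hull_inc)
        moreover have "\<bar>inner a (\<zeta> p - p)\<bar> \<le> norm a * (\<rho> * \<epsilon>)"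
        proof -
          have "\<bar>inner a (\<zeta> p - p)\<bar> \<le> norm a * norm (\<zeta> p - p)" by (rule Cauchy_Schwarz_ineq2)
          also have "\<dots> \<le> norm a * (\<rho> * \<epsilon>)" using zd[OF p(1)] by (simp add: dist_norm mult_left_mono)
          finally show ?thesis .
        qed
        moreover have "inner a k = inner a p + inner a (\<zeta> p - p)" using p by (simp add: inner_diff_right)
        ultimately show "k \<in> {k. inner a k \<ge> b - norm a * (\<rho> * \<epsilon>)}" by auto
      qed
      hence "K' \<subseteq> {k. inner a k \<ge> b - norm a * (\<rho> * \<epsilon>)}"
        unfolding K'_def by (rule hull_minimal) (rule convex_halfspace_ge)
      hence "inner a w \<ge> b - norm a * (\<rho> * \<epsilon>)" using wK' by blast
      moreover have "inner a w = inner a y - norm a * (\<rho> * \<epsilon>)"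
        using a0 by (simp add: w_def inner_diff_right power2_norm_eq_inner[symmetric] power2_eq_square)
      ultimately show False using ab(1) by simp
    qed
  qed
  have xK: "x \<in> K" using b2 eps by auto
  have ne: "P \<noteq> {}" using xK K_def by auto
  have "infdist x (P \<union> frontier K) < \<epsilon>" using dense xK by (simp add: eps_dense_def K_def)
  moreover have cl: "closed (P \<union> frontier K)" using fin by (intro closed_Un) (auto simp: finite_imp_closed)
  moreover have "P \<union> frontier K \<noteq> {}" using ne by blast
  then obtain z where z0: "z \<in> P \<union> frontier K" "infdist x (P \<union> frontier K) = dist x z"
    using infdist_attains_inf[OF cl] by blast
  ultimately have z: "z \<in> P \<union> frontier K" "dist x z < \<epsilon>" using z0 by auto
  have "z \<notin> frontier K"
  proof
    assume zf: "z \<in> frontier K"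
    have "ball x \<epsilon> \<subseteq> interior K" using b2 by (simp add: interior_maximal)
    hence "z \<in> interior K" using z(2) by auto
    thus False using zf by (simp add: frontier_def)
  qed
  hence zP: "z \<in> P" using z(1) by blast
  have "dist x (\<zeta> z) \<le> dist x z + dist z (\<zeta> z)" by (rule dist_triangle)
  also have "\<dots> < \<epsilon> + \<rho> * \<epsilon>" using z(2) zd[OF zP] by (simp add: dist_commute)
  finally show ?thesis using zP P'eq by (intro bexI[of _ "\<zeta> z"]) (auto simp: algebra_simps)
qed



lemma dep_not_good:
  fixes X :: "'a::euclidean_space set"
  assumes fin: "finite X" and c: "card X = DIM('a) + 2" and G0: "0 < G"
  shows "\<not> good G X"
proof
  assume g: "good G X"
  have "affine_dependent X" using affine_dependent_biggerset[OF fin] c by simp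
  then obtain v where v: "v \<in> X" "v \<in> affine hull (X - {v})" unfolding affine_dependent_def by blast
  have a0: "altitude v X = 0" using v by (simp add: altitude_def)
  have ne: "X \<noteq> {}" using v by blast
  have "Min ((\<lambda>p. altitude p X) ` X) \<le> 0" using a0 v fin by (metis Min_le finite_imageI image_eqI)
  moreover have "real (card X - 1) * simplex_L X \<ge> 0" using simplex_L_ge[OF fin v(1) v(1)] by simp
  ultimately have "thickness X \<le> 0" using c by (simp add: thickness_def divide_nonpos_nonneg)
  moreover have "thickness X \<ge> G ^ (card X - 1)" using g ne unfolding good_def by blast
  moreover have "G ^ (card X - 1) > 0" using G0 by simp
  ultimately show False by linarith
qed

lemma infdist_sphere_ge:
  fixes q :: "'a::euclidean_space"
  assumes "z0 \<in> sphere x r"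
  shows "\<bar>dist q x - r\<bar> \<le> infdist q (sphere x r)"
proof -
  obtain z where z: "z \<in> sphere x r" "infdist q (sphere x r) = dist q z"
  proof -
    have "sphere x r \<noteq> {}" using assms by blast
    thus ?thesis using infdist_attains_inf[of "sphere x r" q] that by auto
  qed
  have "dist x z = r" using z(1) by simp
  thus ?thesis using z(2) dist_triangle[of q x z] dist_triangle[of x z q]
    by (simp add: dist_commute abs_le_iff)
qed

theorem mainTheorem11:
  fixes P P' :: "'a::euclidean_space set"
    and \<mu> \<epsilon> \<rho>\<^sub>0 \<Gamma>\<^sub>0 \<delta>\<^sub>0 :: real
  assumes net: "is_net P \<mu> \<epsilon>"
    and rho_pos: "0 < \<rho>\<^sub>0" and rho_le: "\<rho>\<^sub>0 \<le> \<mu> / 4"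
    and pert: "is_perturbation P P' (\<rho>\<^sub>0 * \<epsilon>)"
    and Gamma_pos: "0 < \<Gamma>\<^sub>0" and Gamma_le1: "\<Gamma>\<^sub>0 \<le> 1"
    and delta_nonneg: "0 \<le> \<delta>\<^sub>0"
    and delta_le: "\<delta>\<^sub>0 \<le> \<Gamma>\<^sub>0 ^ (DIM('a) + 1)"
    and Gamma_le: "\<Gamma>\<^sub>0 \<le> 2 * \<mu>\<^sup>2 / 75"
    and no_tau: "\<not> (\<exists>\<tau>. \<tau> \<subseteq> P' \<and> \<tau> \<noteq> {} \<and>
            hoop (2 * (16 / \<mu>) ^ 3 * \<Gamma>\<^sub>0) \<tau> \<and>
            (\<forall>p\<in>\<tau>. has_circumball (\<tau> - {p}) \<and> circumradius (\<tau> - {p}) < 2 * \<epsilon>) \<and>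
            simplex_L \<tau> < 5 / 2 * (1 + 1 / 2 * \<delta>\<^sub>0 * \<mu>) * \<epsilon> \<and>
            (\<forall>\<sigma>. \<sigma> \<subseteq> \<tau> \<and> \<sigma> \<noteq> {} \<and> card \<sigma> = card \<tau> - 1 \<longrightarrow> good \<Gamma>\<^sub>0 \<sigma>))"
  shows "(\<forall>\<tau>. \<not> forbidden_config P' ((\<mu> - 2 * \<rho>\<^sub>0) / (1 + \<rho>\<^sub>0)) ((1 + \<rho>\<^sub>0) * \<epsilon>) \<Gamma>\<^sub>0 \<delta>\<^sub>0 \<tau>)
    \<and> (\<forall>\<sigma> \<in> Del_D P' ((1 + \<rho>\<^sub>0) * \<epsilon>). card \<sigma> = DIM('a) + 1 \<longrightarrow>
         good \<Gamma>\<^sub>0 \<sigma> \<and>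
         protected P' (\<delta>\<^sub>0 * ((\<mu> - 2 * \<rho>\<^sub>0) / (1 + \<rho>\<^sub>0)) * ((1 + \<rho>\<^sub>0) * \<epsilon>)) \<sigma>)"
proof -
  have finP: "finite P" and mu0: "0 < \<mu>" and mu1: "\<mu> \<le> 1" and eps: "0 < \<epsilon>"
    and dense: "eps_dense P \<epsilon>" and sepP: "separated P (\<mu> * \<epsilon>)"
    using net by (auto simp: is_net_def)
  obtain \<zeta> where bij: "bij_betw \<zeta> P P'" and zd: "\<And>p. p \<in> P \<Longrightarrow> dist (\<zeta> p) p \<le> \<rho>\<^sub>0 * \<epsilon>"
    using pert by (auto simp: is_perturbation_def)
  define s where "s = (\<mu> - 2 * \<rho>\<^sub>0) * \<epsilon>"
  define \<mu>' where "\<mu>' = (\<mu> - 2 * \<rho>\<^sub>0) / (1 + \<rho>\<^sub>0)"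
  define \<epsilon>' where "\<epsilon>' = (1 + \<rho>\<^sub>0) * \<epsilon>"
  have me': "\<mu>' * \<epsilon>' = s" using rho_pos by (simp add: \<mu>'_def \<epsilon>'_def s_def)
  have dme: "\<delta>\<^sub>0 * \<mu>' * \<epsilon>' = \<delta>\<^sub>0 * s" using me' by (simp add: mult.assoc)
  have s1: "\<mu> * \<epsilon> / 2 \<le> s"
  proof -
    have "\<mu> / 2 \<le> \<mu> - 2 * \<rho>\<^sub>0" using rho_le by simp
    hence "\<mu> / 2 * \<epsilon> \<le> (\<mu> - 2 * \<rho>\<^sub>0) * \<epsilon>" using eps by (intro mult_right_mono) auto
    thus ?thesis by (simp add: s_def)
  qed
  have s2: "s \<le> \<mu> * \<epsilon>" using rho_pos eps unfolding s_def by (simp add: mult_right_mono)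
  have s0: "s > 0" using s1 mult_pos_pos[OF mu0 eps] by linarith
  have eps'le: "\<epsilon>' \<le> 5/4 * \<epsilon>"
  proof -
    have "1 + \<rho>\<^sub>0 \<le> 5/4" using rho_le mu1 by simp
    thus ?thesis unfolding \<epsilon>'_def using eps by (intro mult_right_mono) auto
  qed
  have P'eq: "P' = \<zeta> ` P" using bij by (simp add: bij_betw_def)
  have finP': "finite P'" using finP P'eq by simp
  have sepP': "s \<le> dist u w" if uP: "u \<in> P'" and wP: "w \<in> P'" and uw: "u \<noteq> w" for u w
  proof -
    obtain a b where ab: "a \<in> P" "b \<in> P" "u = \<zeta> a" "w = \<zeta> b" using uP wP P'eq by blast
    have "a \<noteq> b" using ab uw by blast
    hence "\<mu> * \<epsilon> \<le> dist a b" using sepP ab by (simp add: separated_def)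
    moreover have "dist a b \<le> dist a u + dist u w + dist w b"
      using dist_triangle[of a w u] dist_triangle[of a b w] by linarith
    moreover have "dist a u \<le> \<rho>\<^sub>0 * \<epsilon>" "dist w b \<le> \<rho>\<^sub>0 * \<epsilon>" using zd ab by (auto simp: dist_commute)
    ultimately show ?thesis by (simp add: s_def algebra_simps)
  qed
  have part1: "\<not> forbidden_config P' \<mu>' \<epsilon>' \<Gamma>\<^sub>0 \<delta>\<^sub>0 \<tau>" for \<tau>
  proof
    assume fc: "forbidden_config P' \<mu>' \<epsilon>' \<Gamma>\<^sub>0 \<delta>\<^sub>0 \<tau>"
    then obtain p C R where tP: "\<tau> \<subseteq> P'" and c2: "2 \<le> card \<tau>" and cm: "card \<tau> \<le> DIM('a) + 2"
      and fl: "flake \<Gamma>\<^sub>0 \<tau>" and p: "p \<in> \<tau>" and circ: "circumscribes (\<tau> - {p}) C R"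
      and RC: "R < \<epsilon>'" and pd: "\<bar>dist p C - R\<bar> \<le> \<delta>\<^sub>0 * \<mu>' * \<epsilon>'"
      unfolding forbidden_config_def by blast
    have fin: "finite \<tau>" using tP finP' finite_subset by blast
    have dle: "\<delta>\<^sub>0 * s \<le> \<Gamma>\<^sub>0 ^ (card \<tau> - 1) * s"
    proof -
      have "\<Gamma>\<^sub>0 ^ (DIM('a) + 1) \<le> \<Gamma>\<^sub>0 ^ (card \<tau> - 1)"
        using power_decreasing[of "card \<tau> - 1" "DIM('a) + 1" \<Gamma>\<^sub>0] cm Gamma_pos Gamma_le1 by simp
      thus ?thesis using delta_le s0 by (intro mult_right_mono) auto
    qed
    have core: "hoop (2 * (16 / \<mu>) ^ 3 * \<Gamma>\<^sub>0) \<tau>"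
      "\<forall>q\<in>\<tau>. has_circumball (\<tau> - {q}) \<and> circumradius (\<tau> - {q}) < 2 * \<epsilon>"
      "simplex_L \<tau> \<le> 2 * R + \<delta>\<^sub>0 * s"
      using forb_core[OF fin fl Gamma_pos Gamma_le1 Gamma_le mu0 mu1 eps s1 s2 _ p _ _ _ _ dle]
        sepP' tP circ RC eps'le pd dme delta_nonneg s0
      by (auto simp: circumscribes_def subset_iff)
    have Lb: "simplex_L \<tau> < 5 / 2 * (1 + 1 / 2 * \<delta>\<^sub>0 * \<mu>) * \<epsilon>"
    proof -
      have "2 * R < 2 * ((1 + \<rho>\<^sub>0) * \<epsilon>)" using RC by (simp add: \<epsilon>'_def)
      moreover have "\<rho>\<^sub>0 * \<epsilon> \<le> 1/4 * \<epsilon>" using rho_le mu1 eps by (intro mult_right_mono) auto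
      moreover have "\<delta>\<^sub>0 * s \<le> \<delta>\<^sub>0 * (\<mu> * \<epsilon>)" using s2 delta_nonneg by (simp add: mult_left_mono)
      ultimately have "simplex_L \<tau> < 5/2 * \<epsilon> + \<delta>\<^sub>0 * (\<mu> * \<epsilon>)" using core(3) by (simp add: algebra_simps)
      moreover have "\<delta>\<^sub>0 * (\<mu> * \<epsilon>) \<le> 5/4 * (\<delta>\<^sub>0 * (\<mu> * \<epsilon>))" using delta_nonneg mu0 eps by simp
      ultimately show ?thesis by (simp add: algebra_simps)
    qed
    have facets: "\<forall>\<sigma>. \<sigma> \<subseteq> \<tau> \<and> \<sigma> \<noteq> {} \<and> card \<sigma> = card \<tau> - 1 \<longrightarrow> good \<Gamma>\<^sub>0 \<sigma>"
    proof (intro allI impI)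
      fix \<sigma> assume a: "\<sigma> \<subseteq> \<tau> \<and> \<sigma> \<noteq> {} \<and> card \<sigma> = card \<tau> - 1"
      hence "\<sigma> \<subset> \<tau>" using c2 by auto
      thus "good \<Gamma>\<^sub>0 \<sigma>" using fl a unfolding flake_def by blast
    qed
    show False using no_tau tP p core(1,2) Lb facets by blast
  qed
  have dpos: "\<delta>\<^sub>0 * \<mu>' * \<epsilon>' \<ge> 0" unfolding dme using delta_nonneg s0 by simp
  have part2: "good \<Gamma>\<^sub>0 \<sigma> \<and> protected P' (\<delta>\<^sub>0 * \<mu>' * \<epsilon>') \<sigma>"
    if sD: "\<sigma> \<in> Del_D P' \<epsilon>'" and cs: "card \<sigma> = DIM('a) + 1" for \<sigma>
  proof -
    obtain x r where sP: "\<sigma> \<subseteq> P'" and dball: "delaunay_ball P' x r" and ssph: "\<sigma> \<subseteq> sphere x r"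
      and xD: "x \<in> D_eps P' \<epsilon>'"
      using sD unfolding Del_D_def by blast
    have fs: "finite \<sigma>" using sP finP' finite_subset by blast
    obtain z where z: "z \<in> P'" "dist x z < \<epsilon>'"
      using del_radius[OF finP dense eps bij zd rho_pos] xD by (auto simp: \<epsilon>'_def)
    have "z \<notin> ball x r" using dball z(1) by (auto simp: delaunay_ball_def)
    hence rl: "r < \<epsilon>'" using z(2) by simp
    have cs2: "card \<sigma> \<ge> 2" using cs DIM_positive[where 'a='a] by linarith
    obtain u w where uw: "u \<in> \<sigma>" "w \<in> \<sigma>" "u \<noteq> w" using two_pts[OF fs cs2] by blast
    have "0 < dist u w" using uw by simp
    also have "\<dots> \<le> dist u x + dist w x" by (rule dist_triangle2)
    also have "\<dots> = 2 * r" using uw ssph by (auto simp: subset_iff dist_commute)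
    finally have r0: "r > 0" by simp
    have gs: "good \<Gamma>\<^sub>0 \<sigma>"
    proof (rule ccontr)
      assume "\<not> good \<Gamma>\<^sub>0 \<sigma>"
      then obtain \<tau> where t: "\<tau> \<subseteq> \<sigma>" "flake \<Gamma>\<^sub>0 \<tau>" using flake_exists[OF fs] by blast
      have ft: "finite \<tau>" using t fs finite_subset by blast
      have c3: "card \<tau> \<ge> 3" by (rule flake_card[OF ft t(2) Gamma_pos Gamma_le1])
      have "card \<tau> \<le> card \<sigma>" using t(1) fs by (simp add: card_mono)
      then obtain p where p: "p \<in> \<tau>" using c3 by (metis card.empty empty_iff not_numeral_le_zero equals0I)
      have "forbidden_config P' \<mu>' \<epsilon>' \<Gamma>\<^sub>0 \<delta>\<^sub>0 \<tau>"
        unfolding forbidden_config_def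
      proof (intro conjI bexI[OF _ p] exI)
        show "\<tau> \<subseteq> P'" using t sP by blast
        show "2 \<le> card \<tau>" using c3 by simp
        show "card \<tau> \<le> DIM('a) + 2" using \<open>card \<tau> \<le> card \<sigma>\<close> cs by simp
        show "flake \<Gamma>\<^sub>0 \<tau>" by (rule t(2))
        show "circumscribes (\<tau> - {p}) x r" using t ssph by (auto simp: circumscribes_def)
        show "r < \<epsilon>'" by (rule rl)
        have "dist p x = r" using p t ssph by (auto simp: subset_iff dist_commute)
        thus "\<bar>dist p x - r\<bar> \<le> \<delta>\<^sub>0 * \<mu>' * \<epsilon>'" using dpos by simp
      qed
      thus False using part1 by blast
    qed
    have "protected P' (\<delta>\<^sub>0 * \<mu>' * \<epsilon>') \<sigma>"
      unfolding protected_def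
    proof (intro exI conjI ballI)
      show "delaunay_ball P' x r" by (rule dball)
      show "\<sigma> \<subseteq> sphere x r" by (rule ssph)
      fix q assume q: "q \<in> P' - \<sigma>"
      show "infdist q (sphere x r) > \<delta>\<^sub>0 * \<mu>' * \<epsilon>'"
      proof (rule ccontr)
        assume qn: "\<not> infdist q (sphere x r) > \<delta>\<^sub>0 * \<mu>' * \<epsilon>'"
        define X where "X = insert q \<sigma>"
        have fX: "finite X" using fs by (simp add: X_def)
        have cX: "card X = DIM('a) + 2" using q fs cs by (simp add: X_def)
        have "\<not> good \<Gamma>\<^sub>0 X" by (rule dep_not_good[OF fX cX Gamma_pos])
        then obtain \<tau> where t: "\<tau> \<subseteq> X" "flake \<Gamma>\<^sub>0 \<tau>" using flake_exists[OF fX] by blast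
        have ft: "finite \<tau>" using t fX finite_subset by blast
        have c3: "card \<tau> \<ge> 3" by (rule flake_card[OF ft t(2) Gamma_pos Gamma_le1])
        have qt: "q \<in> \<tau>"
        proof (rule ccontr)
          assume "q \<notin> \<tau>"
          hence "\<tau> \<subseteq> \<sigma>" using t(1) X_def by blast
          hence "good \<Gamma>\<^sub>0 \<tau>" using gs good_subset by blast
          thus False using t(2) unfolding flake_def by blast
        qed
        have "card \<tau> \<le> card X" using t(1) fX by (simp add: card_mono)
        have "forbidden_config P' \<mu>' \<epsilon>' \<Gamma>\<^sub>0 \<delta>\<^sub>0 \<tau>"
          unfolding forbidden_config_def
        proof (intro conjI bexI[OF _ qt] exI)
          show "\<tau> \<subseteq> P'" using t sP q X_def by blast
          show "2 \<le> card \<tau>" using c3 by simp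
          show "card \<tau> \<le> DIM('a) + 2" using \<open>card \<tau> \<le> card X\<close> cX by simp
          show "flake \<Gamma>\<^sub>0 \<tau>" by (rule t(2))
          show "circumscribes (\<tau> - {q}) x r" using t ssph X_def by (auto simp: circumscribes_def)
          show "r < \<epsilon>'" by (rule rl)
          have "\<bar>dist q x - r\<bar> \<le> infdist q (sphere x r)"
            by (rule infdist_sphere_ge[of u]) (use uw ssph in blast)
          thus "\<bar>dist q x - r\<bar> \<le> \<delta>\<^sub>0 * \<mu>' * \<epsilon>'" using qn by linarith
        qed
        thus False using part1 by blast
      qed
    qed
    thus ?thesis using gs by blast
  qed
  show ?thesis using part1 part2 unfolding \<mu>'_def \<epsilon>'_def by blast
qed


end
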